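(* Let $Z$ be a standard normal random variable. Then the distribution of $\ln|Z|$ is infinitely divisible. More specifically, if $E_0,E_1,E_2,\dots$ are independent identically distributed standard exponential random variables (i.e. $\mathbb P(E_j>x)=e^{-x}$ for $x\ge 0$) and $\tilde E_j:=E_j-1$, then the series below converge almost surely and $$\ln|Z|\overset{D}{=}\frac{\ln 2}{2}-E_0-\sum_{j=1}^\infty\Big[\frac{E_j}{2j+1}-\frac12\ln\Big(1+\frac1j\Big)\Big] = -\frac{\gamma+\ln 2}{2}-\tilde E_0-\sum_{j=1}^\infty\frac{\tilde E_j}{2j+1},$$ where $\gamma$ is Euler's constant.
   Context: $\overset{D}{=}$ denotes equality in distribution. The distribution of $\ln|Z|$ for standard normal $Z$ is called the exp-normal distribution. *)

theory Defs
  imports "HOL-Probability.Probability"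
begin

fun conv_pow :: "real measure \<Rightarrow> nat \<Rightarrow> real measure" where
  "conv_pow \<nu> 0 = return borel 0"
| "conv_pow \<nu> (Suc n) = convolution \<nu> (conv_pow \<nu> n)"

definition infinitely_divisible :: "real measure \<Rightarrow> bool" where
  "infinitely_divisible \<mu> \<longleftrightarrow>
     (\<forall>n::nat. n \<ge> 1 \<longrightarrow>
        (\<exists>\<nu>. prob_space \<nu> \<and> sets \<nu> = sets borel \<and> \<mu> = conv_pow \<nu> n))"

end

theory Submission
  imports Defs "HOL-Real_Asymp.Real_Asymp"
begin


lemma grid_bound_ev:
  "eventually (\<lambda>i::nat. real i ^4 * (real (Suc i ^ 6) - real (i^6)) / (2 * real (i^6) + 1)^2 \<le> 1 / real i ^ 2) at_top"
  by real_asymp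

lemma grid_D_lim:
  "(\<lambda>i::nat. (real (Suc i ^ 6) - real (i^6)) / (2 * real (i^6) + 1)) \<longlonglongrightarrow> 0"
  by real_asymp

lemma summable_inv_sq: "summable (\<lambda>i::nat. 1 / real i ^ 2)"
  using inverse_power_summable[of 2, where 'a=real] by (simp add: field_simps)

context prob_space begin

lemma indep_pair_integral:
  fixes Y :: "nat \<Rightarrow> 'a \<Rightarrow> real"
  assumes ind: "indep_vars (\<lambda>_. borel) Y UNIV" and int: "\<And>k. integrable M (Y k)"
    and jk: "j \<noteq> k"
  shows "integrable M (\<lambda>\<omega>. Y j \<omega> * Y k \<omega>)"
    "expectation (\<lambda>\<omega>. Y j \<omega> * Y k \<omega>) = expectation (Y j) * expectation (Y k)"
proof -
  have I: "indep_vars (\<lambda>_. borel) Y {j,k}"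
    by (rule indep_vars_subset[OF ind]) auto
  have "integrable M (\<lambda>\<omega>. \<Prod>i\<in>{j,k}. Y i \<omega>)"
    by (rule indep_vars_integrable[OF _ I]) (auto intro: int)
  then show "integrable M (\<lambda>\<omega>. Y j \<omega> * Y k \<omega>)" using jk by simp
  have "expectation (\<lambda>\<omega>. \<Prod>i\<in>{j,k}. Y i \<omega>) = (\<Prod>i\<in>{j,k}. expectation (Y i))"
    by (rule indep_vars_lebesgue_integral[OF _ I]) (auto intro: int)
  then show "expectation (\<lambda>\<omega>. Y j \<omega> * Y k \<omega>) = expectation (Y j) * expectation (Y k)"
    using jk by simp
qed

lemma sq_sum_indep:
  fixes Y :: "nat \<Rightarrow> 'a \<Rightarrow> real"
  assumes ind: "indep_vars (\<lambda>_. borel) Y UNIV" and int: "\<And>k. integrable M (Y k)"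
    and int2: "\<And>k. integrable M (\<lambda>\<omega>. (Y k \<omega>)\<^sup>2)"
    and mean0: "\<And>k. expectation (Y k) = 0" and fin: "finite J"
  shows "integrable M (\<lambda>\<omega>. (\<Sum>j\<in>J. c j * Y j \<omega>)\<^sup>2)"
    "expectation (\<lambda>\<omega>. (\<Sum>j\<in>J. c j * Y j \<omega>)\<^sup>2) = (\<Sum>j\<in>J. (c j)\<^sup>2 * expectation (\<lambda>\<omega>. (Y j \<omega>)\<^sup>2))"
proof -
  have eq: "(\<lambda>\<omega>. (\<Sum>j\<in>J. c j * Y j \<omega>)\<^sup>2) = (\<lambda>\<omega>. \<Sum>j\<in>J. \<Sum>k\<in>J. c j * c k * (Y j \<omega> * Y k \<omega>))"
    by (auto simp: power2_eq_square sum_product intro!: sum.cong)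
  have intjk: "integrable M (\<lambda>\<omega>. Y j \<omega> * Y k \<omega>)" for j k
  proof (cases "j = k")
    case True then show ?thesis using int2[of j] by (simp add: power2_eq_square)
  next
    case False then show ?thesis using indep_pair_integral[OF ind int] by blast
  qed
  have ejk: "expectation (\<lambda>\<omega>. Y j \<omega> * Y k \<omega>) = (if j = k then expectation (\<lambda>\<omega>. (Y j \<omega>)\<^sup>2) else 0)" for j k
  proof (cases "j = k")
    case True then show ?thesis by (simp add: power2_eq_square)
  next
    case False then show ?thesis using indep_pair_integral[OF ind int] mean0 by simp
  qed
  show "integrable M (\<lambda>\<omega>. (\<Sum>j\<in>J. c j * Y j \<omega>)\<^sup>2)"
    unfolding eq by (auto intro!: Bochner_Integration.integrable_sum intjk)
  have "expectation (\<lambda>\<omega>. (\<Sum>j\<in>J. c j * Y j \<omega>)\<^sup>2) =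
     (\<Sum>j\<in>J. \<Sum>k\<in>J. c j * c k * expectation (\<lambda>\<omega>. Y j \<omega> * Y k \<omega>))"
  proof -
    have i1: "integrable M (\<lambda>\<omega>. c j * c k * (Y j \<omega> * Y k \<omega>))" for j k
      using intjk[of j k] by simp
    have i2: "integrable M (\<lambda>\<omega>. \<Sum>k\<in>J. c j * c k * (Y j \<omega> * Y k \<omega>))" for j
      by (rule Bochner_Integration.integrable_sum) (rule i1)
    show ?thesis unfolding eq
      apply (subst Bochner_Integration.integral_sum[OF i2])
      apply (rule sum.cong[OF refl])
      apply (subst Bochner_Integration.integral_sum[OF i1])
      by simp
  qed
  also have "\<dots> = (\<Sum>j\<in>J. \<Sum>k\<in>J. if k = j then c j * c k * expectation (\<lambda>\<omega>. (Y j \<omega>)\<^sup>2) else 0)"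
    by (intro sum.cong refl) (simp add: ejk)
  also have "\<dots> = (\<Sum>j\<in>J. (c j)\<^sup>2 * expectation (\<lambda>\<omega>. (Y j \<omega>)\<^sup>2))"
    using fin by (simp add: sum.delta power2_eq_square)
  finally show "expectation (\<lambda>\<omega>. (\<Sum>j\<in>J. c j * Y j \<omega>)\<^sup>2) = (\<Sum>j\<in>J. (c j)\<^sup>2 * expectation (\<lambda>\<omega>. (Y j \<omega>)\<^sup>2))" .
qed

end


definition blk :: "nat \<Rightarrow> nat set" where "blk i = {i^6..<(Suc i)^6}"

lemma blk_mono: "i^6 \<le> (Suc i)^6"
  by (intro power_mono) auto

lemma card_blk: "real (card (blk i)) = real (Suc i ^ 6) - real (i^6)"
  using blk_mono[of i] by (simp add: blk_def of_nat_diff)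

lemma blk_sum_bound:
  fixes f :: "nat \<Rightarrow> real"
  assumes "\<And>j. i^6 \<le> j \<Longrightarrow> f j \<le> K"
  shows "sum f (blk i) \<le> (real (Suc i ^ 6) - real (i^6)) * K"
proof -
  have "sum f (blk i) \<le> of_nat (card (blk i)) * K"
    by (rule sum_bounded_above) (auto simp: blk_def assms)
  then show ?thesis by (simp add: card_blk)
qed

lemma det_summable:
  fixes x :: "nat \<Rightarrow> real" and m :: real
  assumes nn: "\<And>j. 0 \<le> x j"
    and sw: "summable (\<lambda>i. real i^4 * (\<Sum>j\<in>blk i. (x j - m)/(2*real j+1))^2)"
  shows "summable (\<lambda>j. (x j - m)/(2*real j+1))"
proof -
  define y where "y j = (x j - m)/(2*real j+1)" for j
  define b where "b j = 1/(2*real j+1)" for j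
  define \<Delta> where "\<Delta> i = (\<Sum>j\<in>blk i. y j)" for i
  define S where "S n = (\<Sum>j<n. y j)" for n
  define D where "D i = (\<Sum>j\<in>blk i. b j)" for i
  have bpos: "0 < b j" for j by (simp add: b_def)
  have y_eq: "y j = x j * b j - m * b j" for j by (simp add: y_def b_def diff_divide_distrib)
  have "(\<lambda>i. real i^4 * (\<Delta> i)^2) \<longlonglongrightarrow> 0"
    using summable_LIMSEQ_zero[OF sw] by (simp add: \<Delta>_def y_def)
  then have ev1: "eventually (\<lambda>i. real i^4 * (\<Delta> i)^2 < 1) at_top"
    by (rule order_tendstoD) simp
  have ev2: "eventually (\<lambda>i. norm (\<Delta> i) \<le> 1 / real i ^ 2) at_top"
    using ev1 eventually_ge_at_top[of "1::nat"]
  proof eventually_elim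
    case (elim i)
    have ip: "0 < real i ^ 2" using elim by simp
    have "(real i ^ 2 * \<bar>\<Delta> i\<bar>)^2 = real i^4 * (\<Delta> i)^2"
      by (simp add: power_mult_distrib power2_abs flip: power_mult)
    also have "\<dots> < 1" by (rule elim)
    finally have "(real i ^ 2 * \<bar>\<Delta> i\<bar>)^2 < 1^2" by simp
    then have "real i ^ 2 * \<bar>\<Delta> i\<bar> < 1"
      by (rule power_less_imp_less_base) simp
    then show ?case using ip by (simp add: field_simps)
  qed
  have sD: "summable \<Delta>"
    by (rule summable_comparison_test_ev[OF ev2 summable_inv_sq])
  have Sg: "S (i^6) = (\<Sum>k<i. \<Delta> k)" for i
  proof (induction i)
    case 0 then show ?case by (simp add: S_def)
  next
    case (Suc i)
    have "S (Suc i ^ 6) = (\<Sum>j\<in>{0..<i^6}. y j) + (\<Sum>j\<in>{i^6..<Suc i^6}. y j)"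
      unfolding S_def atLeast0LessThan[symmetric]
      by (rule sum.atLeastLessThan_concat[symmetric]) (auto simp: blk_mono)
    also have "\<dots> = S (i^6) + \<Delta> i"
      by (simp add: S_def \<Delta>_def blk_def atLeast0LessThan)
    finally show ?case using Suc by simp
  qed
  define L where "L = suminf \<Delta>"
  have SgL: "(\<lambda>i. S (i^6)) \<longlonglongrightarrow> L"
    unfolding Sg L_def by (rule summable_LIMSEQ[OF sD])
  have D_nn: "0 \<le> D i" for i unfolding D_def by (intro sum_nonneg) (simp add: b_def)
  have D_le: "D i \<le> (real (Suc i ^ 6) - real (i^6)) / (2 * real (i^6) + 1)" for i
  proof -
    have "D i \<le> (real (Suc i ^ 6) - real (i^6)) * (1 / (2 * real (i^6) + 1))"
      unfolding D_def by (rule blk_sum_bound) (auto simp: b_def intro!: divide_left_mono mult_pos_pos add_nonneg_pos)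
    then show ?thesis by simp
  qed
  have DL: "D \<longlonglongrightarrow> 0"
    by (rule tendsto_sandwich[OF _ _ tendsto_const grid_D_lim]) (use D_nn D_le in \<open>auto intro!: always_eventually\<close>)
  have osc: "\<bar>S n - S (i^6)\<bar> \<le> \<bar>\<Delta> i\<bar> + 2 * \<bar>m\<bar> * D i" if "i^6 \<le> n" "n \<le> Suc i ^ 6" for i n
  proof -
    define P where "P = (\<Sum>j\<in>{i^6..<n}. x j * b j)"
    define Q where "Q = (\<Sum>j\<in>{i^6..<n}. b j)"
    have "S n = (\<Sum>j\<in>{0..<i^6}. y j) + (\<Sum>j\<in>{i^6..<n}. y j)"
      unfolding S_def atLeast0LessThan[symmetric]
      by (rule sum.atLeastLessThan_concat[symmetric]) (use that in auto)
    then have "S n - S (i^6) = P - m * Q"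
      by (simp add: S_def atLeast0LessThan P_def Q_def y_eq sum_subtractf sum_distrib_left)
    moreover have "0 \<le> P" unfolding P_def using nn bpos by (intro sum_nonneg) (simp add: less_imp_le)
    moreover have "0 \<le> Q" unfolding Q_def using bpos by (intro sum_nonneg) (simp add: less_imp_le)
    moreover have "P \<le> (\<Sum>j\<in>blk i. x j * b j)" unfolding P_def blk_def
      using nn bpos that by (intro sum_mono2) (auto simp: less_imp_le)
    moreover have "Q \<le> D i" unfolding Q_def D_def blk_def
      using bpos that by (intro sum_mono2) (auto simp: less_imp_le)
    moreover have "(\<Sum>j\<in>blk i. x j * b j) = \<Delta> i + m * D i"
      by (simp add: \<Delta>_def D_def y_eq sum_subtractf sum_distrib_left)
    moreover have "\<bar>m * Q\<bar> \<le> \<bar>m\<bar> * D i"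
      unfolding abs_mult using \<open>0 \<le> Q\<close> \<open>Q \<le> D i\<close> by (intro mult_left_mono) auto
    moreover have "m * D i \<le> \<bar>m\<bar> * D i"
      using D_nn by (intro mult_right_mono) auto
    ultimately show ?thesis by linarith
  qed
  define e where "e i = \<bar>S (i^6) - L\<bar> + \<bar>\<Delta> i\<bar> + 2 * \<bar>m\<bar> * D i" for i
  have eL: "e \<longlonglongrightarrow> 0"
  proof -
    have t1: "(\<lambda>i. \<bar>S (i^6) - L\<bar>) \<longlonglongrightarrow> \<bar>L - L\<bar>"
      by (intro tendsto_intros SgL)
    have t2: "(\<lambda>i. \<bar>\<Delta> i\<bar>) \<longlonglongrightarrow> \<bar>0\<bar>"
      by (intro tendsto_intros summable_LIMSEQ_zero[OF sD])
    have t3: "(\<lambda>i. 2 * \<bar>m\<bar> * D i) \<longlonglongrightarrow> 2 * \<bar>m\<bar> * 0"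
      by (intro tendsto_intros DL)
    have "e \<longlonglongrightarrow> \<bar>L - L\<bar> + \<bar>0\<bar> + 2 * \<bar>m\<bar> * 0"
      unfolding e_def by (rule tendsto_add[OF tendsto_add[OF t1 t2] t3])
    then show ?thesis by simp
  qed
  have "S \<longlonglongrightarrow> L"
  proof (rule LIMSEQ_I)
    fix r :: real assume r: "0 < r"
    from LIMSEQ_D[OF eL r] obtain I where I: "\<And>i. i \<ge> I \<Longrightarrow> norm (e i - 0) < r" by blast
    show "\<exists>no. \<forall>n\<ge>no. norm (S n - L) < r"
    proof (intro exI allI impI)
      fix n assume n: "I^6 \<le> n"
      define i where "i = (LEAST k. n < Suc k ^ 6)"
      have ex: "n < Suc n ^ 6"
      proof -
        have "Suc n \<le> Suc n ^ 6" by (rule self_le_power) auto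
        then show ?thesis by simp
      qed
      have i1: "n < Suc i ^ 6" unfolding i_def by (rule LeastI[of _ n]) (rule ex)
      have i2: "i^6 \<le> n"
      proof (cases i)
        case 0 then show ?thesis by simp
      next
        case (Suc i')
        have "\<not> n < Suc i' ^ 6"
        proof
          assume "n < Suc i' ^ 6"
          then have "i \<le> i'" unfolding i_def by (rule Least_le)
          then show False using Suc by simp
        qed
        then show ?thesis using Suc by simp
      qed
      have iI: "I \<le> i"
      proof (rule ccontr)
        assume "\<not> I \<le> i"
        then have "Suc i \<le> I" by simp
        then have "Suc i ^ 6 \<le> I ^ 6" by (rule power_mono) simp
        then show False using i1 n by linarith
      qed
      have "norm (S n - L) \<le> \<bar>S n - S (i^6)\<bar> + \<bar>S (i^6) - L\<bar>" by simp
      also have "\<dots> \<le> e i" unfolding e_def using osc[OF i2 less_imp_le[OF i1]] by simp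
      also have "\<dots> < r" using I[OF iI] by simp
      finally show "norm (S n - L) < r" .
    qed
  qed
  then have "y sums L" unfolding sums_def S_def .
  then show ?thesis unfolding y_def summable_def by blast
qed

context prob_space begin

lemma as_summable:
  fixes X :: "nat \<Rightarrow> 'a \<Rightarrow> real"
  assumes ind: "indep_vars (\<lambda>_. borel) X UNIV"
    and nonneg: "\<And>k. AE \<omega> in M. 0 \<le> X k \<omega>"
    and int1: "\<And>k. integrable M (X k)" and int2: "\<And>k. integrable M (\<lambda>\<omega>. (X k \<omega>)\<^sup>2)"
    and mean: "\<And>k. expectation (X k) = m" and var: "\<And>k. expectation (\<lambda>\<omega>. (X k \<omega> - m)\<^sup>2) = v"
  shows "AE \<omega> in M. summable (\<lambda>j. (X j \<omega> - m) / (2 * real j + 1))"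
proof -
  have rv[measurable]: "X i \<in> borel_measurable M" for i
    using ind unfolding indep_vars_def by auto
  define Y where "Y k \<omega> = X k \<omega> - m" for k \<omega>
  have indY: "indep_vars (\<lambda>_. borel) Y UNIV"
    unfolding Y_def by (rule indep_vars_compose2[OF ind, where Y="\<lambda>i x. x - m", simplified]) simp
  have intY: "integrable M (Y k)" for k unfolding Y_def using int1[of k] by simp
  have sqY: "(\<lambda>\<omega>. (Y k \<omega>)\<^sup>2) = (\<lambda>\<omega>. (X k \<omega>)\<^sup>2 - 2 * m * X k \<omega> + m\<^sup>2)" for k
    by (auto simp: Y_def power2_eq_square algebra_simps)
  have intY2: "integrable M (\<lambda>\<omega>. (Y k \<omega>)\<^sup>2)" for k
    unfolding sqY using int1[of k] int2[of k] by simp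
  have EY: "expectation (Y k) = 0" for k
    unfolding Y_def using int1[of k] mean[of k] by (simp add: prob_space)
  have EY2: "expectation (\<lambda>\<omega>. (Y k \<omega>)\<^sup>2) = v" for k unfolding Y_def by (rule var)
  have v_nn: "0 \<le> v" using EY2[of 0] by (metis integral_nonneg_AE AE_I2 zero_le_power2)
  define c where "c j = 1 / (2 * real j + 1)" for j
  define \<Delta> where "\<Delta> i \<omega> = (\<Sum>j\<in>blk i. c j * Y j \<omega>)" for i \<omega>
  have \<Delta>_eq: "\<Delta> i \<omega> = (\<Sum>j\<in>blk i. (X j \<omega> - m) / (2 * real j + 1))" for i \<omega>
    by (simp add: \<Delta>_def c_def Y_def)
  have [measurable]: "\<Delta> i \<in> borel_measurable M" for i unfolding \<Delta>_eq by measurable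
  have fin: "finite (blk i)" for i by (simp add: blk_def)
  have int\<Delta>: "integrable M (\<lambda>\<omega>. (\<Delta> i \<omega>)\<^sup>2)" for i
    unfolding \<Delta>_def by (rule sq_sum_indep(1)[OF indY intY intY2 EY fin])
  have E\<Delta>: "expectation (\<lambda>\<omega>. (\<Delta> i \<omega>)\<^sup>2) = v * (\<Sum>j\<in>blk i. (c j)\<^sup>2)" for i
    unfolding \<Delta>_def by (subst sq_sum_indep(2)[OF indY intY intY2 EY fin]) (simp add: EY2 sum_distrib_left mult.commute)
  define a where "a i = real i ^ 4 * expectation (\<lambda>\<omega>. (\<Delta> i \<omega>)\<^sup>2)" for i
  have a_nn: "0 \<le> a i" for i unfolding a_def E\<Delta> using v_nn by (intro mult_nonneg_nonneg sum_nonneg) auto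
  have a_le: "a i \<le> v * (real i ^4 * (real (Suc i ^ 6) - real (i^6)) / (2 * real (i^6) + 1)^2)" for i
  proof -
    have "(\<Sum>j\<in>blk i. (c j)\<^sup>2) \<le> (real (Suc i ^ 6) - real (i^6)) * (1 / (2 * real (i^6) + 1))^2"
      by (rule blk_sum_bound) (auto simp: c_def intro!: power_mono divide_left_mono mult_pos_pos add_nonneg_pos)
    then have "real i ^ 4 * (v * (\<Sum>j\<in>blk i. (c j)\<^sup>2)) \<le> real i ^ 4 * (v * ((real (Suc i ^ 6) - real (i^6)) * (1 / (2 * real (i^6) + 1))^2))"
      using v_nn by (intro mult_left_mono) auto
    then show ?thesis by (simp add: a_def E\<Delta> power_divide field_simps)
  qed
  have sa: "summable a"
  proof (rule summable_comparison_test_ev)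
    show "eventually (\<lambda>i. norm (a i) \<le> v * (1 / real i ^ 2)) at_top"
      using grid_bound_ev
    proof eventually_elim
      case (elim i)
      have "norm (a i) = a i" using a_nn by simp
      also have "\<dots> \<le> v * (real i ^4 * (real (Suc i ^ 6) - real (i^6)) / (2 * real (i^6) + 1)^2)" by (rule a_le)
      also have "\<dots> \<le> v * (1 / real i ^ 2)" using v_nn elim by (intro mult_left_mono) auto
      finally show ?case .
    qed
    show "summable (\<lambda>i. v * (1 / real i ^ 2))" by (intro summable_mult summable_inv_sq)
  qed
  have nn_eq: "(\<integral>\<^sup>+\<omega>. ennreal (real i ^ 4 * (\<Delta> i \<omega>)\<^sup>2) \<partial>M) = ennreal (a i)" for i
  proof -
    have "(\<integral>\<^sup>+\<omega>. ennreal (real i ^ 4 * (\<Delta> i \<omega>)\<^sup>2) \<partial>M) = ennreal (expectation (\<lambda>\<omega>. real i ^ 4 * (\<Delta> i \<omega>)\<^sup>2))"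
      by (rule nn_integral_eq_integral) (auto intro!: int\<Delta>)
    then show ?thesis by (simp add: a_def)
  qed
  have "(\<integral>\<^sup>+\<omega>. (\<Sum>i. ennreal (real i ^ 4 * (\<Delta> i \<omega>)\<^sup>2)) \<partial>M) = (\<Sum>i. ennreal (a i))"
    by (subst nn_integral_suminf) (auto simp: nn_eq)
  also have "\<dots> = ennreal (suminf a)" by (rule suminf_ennreal2[OF a_nn sa])
  finally have "(\<integral>\<^sup>+\<omega>. (\<Sum>i. ennreal (real i ^ 4 * (\<Delta> i \<omega>)\<^sup>2)) \<partial>M) \<noteq> \<infinity>" by simp
  then have "AE \<omega> in M. (\<Sum>i. ennreal (real i ^ 4 * (\<Delta> i \<omega>)\<^sup>2)) \<noteq> \<infinity>"
    by (intro nn_integral_PInf_AE) auto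
  moreover have "AE \<omega> in M. \<forall>j. 0 \<le> X j \<omega>"
    by (subst AE_all_countable) (auto intro: nonneg)
  ultimately show ?thesis
  proof eventually_elim
    case (elim \<omega>)
    have "summable (\<lambda>i. real i ^ 4 * (\<Delta> i \<omega>)\<^sup>2)"
      by (rule summable_suminf_not_top) (use elim in auto)
    then show ?case
      by (intro det_summable[where x="\<lambda>j. X j \<omega>"]) (use elim in \<open>auto simp: \<Delta>_eq\<close>)
  qed
qed

end


lemma norm_iexp[simp]: "norm (iexp x) = 1"
  by (simp add: norm_exp_i_times)

context prob_space begin

lemma char_distr_integral:
  fixes F :: "'a \<Rightarrow> real"
  assumes [measurable]: "F \<in> borel_measurable M"
  shows "char (distr M borel F) s = expectation (\<lambda>\<omega>. iexp (s * F \<omega>))"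
  unfolding char_def by (subst integral_distr) auto

lemma char_series:
  fixes X :: "nat \<Rightarrow> 'a \<Rightarrow> real" and d :: "nat \<Rightarrow> real" and c t :: real
  assumes ind: "indep_vars (\<lambda>_. borel) X UNIV"
    and summ: "AE \<omega> in M. summable (\<lambda>j. X (Suc j) \<omega> / (2 * real (Suc j) + 1) - d j)"
  shows "(\<lambda>n. iexp (t * (c + (\<Sum>j<n. d j))) * (\<Prod>k<Suc n. char (distr M borel (X k)) (- t / (2 * real k + 1))))
          \<longlonglongrightarrow> char (distr M borel (\<lambda>\<omega>. c - X 0 \<omega> - (\<Sum>j. X (Suc j) \<omega> / (2 * real (Suc j) + 1) - d j))) t"
proof -
  have rv[measurable]: "X i \<in> borel_measurable M" for i
    using ind unfolding indep_vars_def by auto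
  define W where "W \<omega> = c - X 0 \<omega> - (\<Sum>j. X (Suc j) \<omega> / (2 * real (Suc j) + 1) - d j)" for \<omega>
  define Wn where "Wn n \<omega> = c - X 0 \<omega> - (\<Sum>j<n. X (Suc j) \<omega> / (2 * real (Suc j) + 1) - d j)" for n \<omega>
  have [measurable]: "W \<in> borel_measurable M" unfolding W_def by measurable
  have [measurable]: "Wn n \<in> borel_measurable M" for n unfolding Wn_def by measurable
  define b where "b k = - t / (2 * real k + 1)" for k
  have lin: "t * Wn n \<omega> = t * (c + (\<Sum>j<n. d j)) + (\<Sum>k<Suc n. b k * X k \<omega>)" for n \<omega>
  proof -
    have "(\<Sum>k<Suc n. b k * X k \<omega>) = - t * X 0 \<omega> + (\<Sum>j<n. b (Suc j) * X (Suc j) \<omega>)"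
      unfolding sum.lessThan_Suc_shift by (simp add: b_def)
    also have "(\<Sum>j<n. b (Suc j) * X (Suc j) \<omega>) = - t * (\<Sum>j<n. X (Suc j) \<omega> / (2 * real (Suc j) + 1))"
      by (simp add: b_def sum_distrib_left)
    finally have eq: "(\<Sum>k<Suc n. b k * X k \<omega>) = - t * X 0 \<omega> + - t * (\<Sum>j<n. X (Suc j) \<omega> / (2 * real (Suc j) + 1))" .
    show ?thesis unfolding eq
      by (simp add: Wn_def sum_subtractf algebra_simps sum_distrib_left sum_negf)
  qed
  have key: "iexp (t * Wn n \<omega>) = iexp (t * (c + (\<Sum>j<n. d j))) * (\<Prod>k<Suc n. iexp (b k * X k \<omega>))" for n \<omega>
    unfolding lin by (simp add: distrib_left exp_add sum_distrib_left exp_sum)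
  have indY: "indep_vars (\<lambda>_. borel) (\<lambda>k \<omega>. iexp (b k * X k \<omega>)) UNIV"
    by (rule indep_vars_compose2[OF ind, where Y="\<lambda>k x. iexp (b k * x)"]) simp
  have intY: "integrable M (\<lambda>\<omega>. iexp (b k * X k \<omega>))" for k
    by (rule integrable_iexp) auto
  have En: "expectation (\<lambda>\<omega>. iexp (t * Wn n \<omega>)) =
      iexp (t * (c + (\<Sum>j<n. d j))) * (\<Prod>k<Suc n. char (distr M borel (X k)) (b k))" for n
  proof -
    have "expectation (\<lambda>\<omega>. iexp (t * Wn n \<omega>)) =
        iexp (t * (c + (\<Sum>j<n. d j))) * expectation (\<lambda>\<omega>. \<Prod>k<Suc n. iexp (b k * X k \<omega>))"
      unfolding key by simp
    also have "expectation (\<lambda>\<omega>. \<Prod>k<Suc n. iexp (b k * X k \<omega>)) = (\<Prod>k<Suc n. expectation (\<lambda>\<omega>. iexp (b k * X k \<omega>)))"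
      by (rule indep_vars_lebesgue_integral[OF finite_lessThan indep_vars_subset[OF indY subset_UNIV] intY])
    also have "\<dots> = (\<Prod>k<Suc n. char (distr M borel (X k)) (b k))"
      by (simp add: char_distr_integral)
    finally show ?thesis .
  qed
  have "(\<lambda>n. expectation (\<lambda>\<omega>. iexp (t * Wn n \<omega>))) \<longlonglongrightarrow> expectation (\<lambda>\<omega>. iexp (t * W \<omega>))"
  proof (rule integral_dominated_convergence[where w="\<lambda>_. 1"])
    show "AE \<omega> in M. (\<lambda>n. iexp (t * Wn n \<omega>)) \<longlonglongrightarrow> iexp (t * W \<omega>)"
      using summ
    proof eventually_elim
      case (elim \<omega>)
      have "(\<lambda>n. Wn n \<omega>) \<longlonglongrightarrow> W \<omega>"
        unfolding Wn_def W_def by (intro tendsto_intros summable_LIMSEQ elim)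
      then show ?case by (intro tendsto_intros)
    qed
  qed auto
  then have "(\<lambda>n. iexp (t * (c + (\<Sum>j<n. d j))) * (\<Prod>k<Suc n. char (distr M borel (X k)) (b k)))
      \<longlonglongrightarrow> char (distr M borel W) t"
    unfolding En char_distr_integral[of W t, OF \<open>W \<in> borel_measurable M\<close>, symmetric] .
  then show ?thesis unfolding W_def[abs_def] b_def .
qed

end


lemma sum_ln_telescope: "(\<Sum>j<n. ln (1 + 1 / real (Suc j))) = ln (real (Suc n))"
proof (induction n)
  case 0 then show ?case by simp
next
  case (Suc n)
  have "ln (real (Suc n)) + ln (1 + 1 / real (Suc n)) = ln (real (Suc n) * (1 + 1 / real (Suc n)))"
  proof -
    have "0 < 1 + 1 / real (Suc n)" by (simp add: add_pos_pos)
    then show ?thesis by (simp add: ln_mult)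
  qed
  also have "real (Suc n) * (1 + 1 / real (Suc n)) = real (Suc (Suc n))"
    by (simp add: field_simps)
  finally show ?case using Suc by simp
qed

lemma ln_Suc_minus_ln: "(\<lambda>n. ln (real (Suc n)) - ln (real n)) \<longlonglongrightarrow> 0"
  by real_asymp

lemma pochhammer_ratio:
  fixes t :: real
  defines "z \<equiv> (1 + \<i> * of_real t) / 2"
  shows "pochhammer (1/2 :: complex) m / pochhammer z m = (\<Prod>k<m. 1 / (1 + \<i> * of_real (t / (2 * real k + 1))))"
proof -
  have nz: "z + of_nat k \<noteq> 0" for k
  proof
    assume "z + of_nat k = 0"
    then have "Re (z + of_nat k) = 0" by simp
    then show False by (simp add: z_def)
  qed
  have "pochhammer (1/2 :: complex) m / pochhammer z m = (\<Prod>k<m. (1/2 + of_nat k) / (z + of_nat k))"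
    by (simp add: pochhammer_prod prod_dividef atLeast0LessThan)
  also have "\<dots> = (\<Prod>k<m. 1 / (1 + \<i> * of_real (t / (2 * real k + 1))))"
  proof (intro prod.cong refl)
    fix k assume "k \<in> {..<m}"
    have d: "(2 * of_nat k + 1 :: complex) \<noteq> 0"
    proof
      assume "(2 * of_nat k + 1 :: complex) = 0"
      then have "Re (2 * of_nat k + 1 :: complex) = 0" by simp
      then show False by simp
    qed
    have h2: "(1/2 :: complex) + of_nat k \<noteq> 0"
    proof
      assume "(1/2 :: complex) + of_nat k = 0"
      then have "Re ((1/2 :: complex) + of_nat k) = 0" by simp
      then show False by simp
    qed
    have "(1/2 + of_nat k) * (1 + \<i> * of_real (t / (2 * real k + 1))) = z + of_nat k"
      by (simp add: complex_eq_iff z_def field_simps)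
    then have "1 + \<i> * of_real (t / (2 * real k + 1)) = (z + of_nat k) / (1/2 + of_nat k)"
      using h2 by (metis nonzero_eq_divide_eq mult.commute)
    then show "(1/2 + of_nat k) / (z + of_nat k) = 1 / (1 + \<i> * of_real (t / (2 * real k + 1)))"
      using nz d by (simp add: field_simps)
  qed
  finally show ?thesis .
qed

lemma gamma_prod_limit:
  fixes t :: real
  shows "(\<lambda>n. iexp (t * (ln 2 / 2 + (\<Sum>j<n. ln (1 + 1 / real (Suc j)) / 2))) *
              (\<Prod>k<Suc n. 1 / (1 + \<i> * of_real (t / (2 * real k + 1)))))
   \<longlonglongrightarrow> iexp (t * ln 2 / 2) * Gamma ((1 + \<i> * of_real t) / 2) / of_real (sqrt pi)"
proof -
  define z where "z = (1 + \<i> * of_real t) / 2"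
  define G where "G n = exp ((\<i> * of_real (t/2)) * of_real (ln (real (Suc n)) - ln (real n)))" for n
  have Gs: "Gamma_series z n / Gamma_series (1/2) n =
      exp ((\<i> * of_real (t/2)) * of_real (ln (real n))) * (pochhammer (1/2) (Suc n) / pochhammer z (Suc n))" for n
  proof -
    have h: "(1/2 :: complex) + of_nat k \<noteq> 0" for k
    proof
      assume "(1/2 :: complex) + of_nat k = 0"
      then have "Re ((1/2 :: complex) + of_nat k) = 0" by simp
      then show False by simp
    qed
    have p1: "pochhammer (1/2 :: complex) (Suc n) \<noteq> 0"
      by (simp add: pochhammer_prod h)
    have "exp (z * of_real (ln (real n))) = exp ((\<i> * of_real (t/2)) * of_real (ln (real n))) * exp (1/2 * of_real (ln (real n)))"
      by (simp add: z_def exp_add[symmetric] field_simps)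
    then show ?thesis using p1
      by (simp add: Gamma_series_def field_simps)
  qed
  have ev: "eventually (\<lambda>n. iexp (t * (ln 2 / 2 + (\<Sum>j<n. ln (1 + 1 / real (Suc j)) / 2))) *
              (\<Prod>k<Suc n. 1 / (1 + \<i> * of_real (t / (2 * real k + 1)))) =
          iexp (t * ln 2 / 2) * G n * (Gamma_series z n / Gamma_series (1/2) n)) at_top"
    using eventually_ge_at_top[of "1::nat"]
  proof eventually_elim
    case (elim n)
    have sm: "(\<Sum>j<n. ln (1 + 1 / real (Suc j)) / 2) = ln (real (Suc n)) / 2"
      using sum_ln_telescope[of n] by (simp add: sum_divide_distrib[symmetric])
    have e1: "iexp (t * (ln 2 / 2 + (\<Sum>j<n. ln (1 + 1 / real (Suc j)) / 2))) =
        iexp (t * ln 2 / 2) * exp ((\<i> * of_real (t/2)) * of_real (ln (real (Suc n))))"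
      unfolding sm by (simp add: exp_add[symmetric] field_simps)
    have e2: "G n * exp ((\<i> * of_real (t/2)) * of_real (ln (real n))) = exp ((\<i> * of_real (t/2)) * of_real (ln (real (Suc n))))"
      by (simp add: G_def exp_add[symmetric] field_simps)
    show ?case
      unfolding e1 Gs pochhammer_ratio[where t=t, folded z_def] e2[symmetric] by (simp add: mult_ac)
  qed
  have "(\<lambda>n. iexp (t * ln 2 / 2) * G n * (Gamma_series z n / Gamma_series (1/2) n))
      \<longlonglongrightarrow> iexp (t * ln 2 / 2) * exp ((\<i> * of_real (t/2)) * of_real 0) * (Gamma z / Gamma (1/2))"
    unfolding G_def
    by (intro tendsto_intros ln_Suc_minus_ln Gamma_series_LIMSEQ)
       (simp add: Gamma_one_half_complex)
  then have "(\<lambda>n. iexp (t * ln 2 / 2) * G n * (Gamma_series z n / Gamma_series (1/2) n))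
      \<longlonglongrightarrow> iexp (t * ln 2 / 2) * Gamma z / of_real (sqrt pi)"
    by (simp add: Gamma_one_half_complex)
  then show ?thesis
    unfolding z_def[symmetric] by (rule Lim_transform_eventually[OF _ eventually_mono[OF ev]]) simp
qed


lemma char_exponential:
  "char (density lborel (exponential_density 1)) s = 1 / (1 - \<i> * of_real s)"
proof -
  define c where "c = \<i> * of_real s - 1"
  have c0: "c \<noteq> 0"
  proof
    assume "c = 0" then have "Re c = 0" by simp
    then show False by (simp add: c_def)
  qed
  define f where "f x = exp (c * of_real x)" for x :: real
  define F where "F x = exp (c * of_real x) / c" for x :: real
  have nf: "norm (f x) = exp (- x)" for x
    by (simp add: f_def norm_exp_eq_Re c_def)
  have f_eq: "exponential_density 1 x *\<^sub>R iexp (s * x) = f x" if "0 < x" for x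
  proof -
    have "exponential_density 1 x *\<^sub>R iexp (s * x) = of_real (exp (-x)) * iexp (s * x)"
      using that by (simp add: exponential_density_def scaleR_conv_of_real)
    also have "\<dots> = exp (of_real (-x) + \<i> * of_real (s * x))"
      by (simp only: exp_add exp_of_real)
    also have "of_real (-x) + \<i> * of_real (s * x) = c * of_real x"
      by (simp add: c_def algebra_simps)
    finally show ?thesis by (simp add: f_def)
  qed
  have [measurable]: "exponential_density 1 \<in> borel_measurable borel"
    by (simp add: borel_measurable_erlang_density)
  have "char (density lborel (exponential_density 1)) s =
      (CLINT x|lborel. exponential_density 1 x *\<^sub>R iexp (s * x))"
    unfolding char_def
    by (rule integral_density) (auto simp: exponential_density_nonneg)
  also have "\<dots> = (CLINT x|lborel. indicator {0<..} x *\<^sub>R f x)"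
  proof (rule integral_cong_AE)
    show "AE x in lborel. exponential_density 1 x *\<^sub>R iexp (s * x) = indicat_real {0<..} x *\<^sub>R f x"
      using AE_lborel_singleton[of 0]
    proof eventually_elim
      case (elim x)
      show ?case
      proof (cases "0 < x")
        case True then show ?thesis using f_eq[OF True] by simp
      next
        case False then have "x < 0" using elim by simp
        then show ?thesis by (simp add: exponential_density_def)
      qed
    qed
  qed (auto simp: f_def)
  also have "\<dots> = (CLBINT x=0..\<infinity>. f x)"
    by (simp add: interval_lebesgue_integral_0_infty set_lebesgue_integral_def)
  also have "\<dots> = 0 - F 0"
  proof (rule interval_integral_FTC_integrable)
    show "(0::ereal) < \<infinity>" by simp
    show "(F has_vector_derivative f x) (at x)" for x
    proof -
      have "((\<lambda>z. exp (c * z) / c) has_field_derivative exp (c * of_real x)) (at (of_real x))"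
        using c0 by (auto intro!: derivative_eq_intros)
      from has_vector_derivative_real_field[OF this] show ?thesis
        unfolding F_def[abs_def] f_def by blast
    qed
    show "isCont f x" for x unfolding f_def by (intro continuous_intros)
    show "set_integrable lborel (einterval 0 \<infinity>) f"
    proof (rule set_integrable_bound[where f="\<lambda>x. exp (- (x * 1))"])
      show "set_integrable lborel (einterval 0 \<infinity>) (\<lambda>x. exp (- (x * 1)))"
        using integrable_I0i_exp_mscale[of 1] by (simp add: zero_ereal_def)
      show "set_borel_measurable lborel (einterval 0 \<infinity>) f"
        unfolding set_borel_measurable_def f_def by measurable
      show "AE x in lborel. x \<in> einterval 0 \<infinity> \<longrightarrow> norm (f x) \<le> norm (exp (- (x * 1)))"
        by (simp add: nf)
    qed
    show "((F \<circ> real_of_ereal) \<longlongrightarrow> F 0) (at_right 0)"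
      unfolding zero_ereal_def ereal_tendsto_simps F_def
      using c0 by (intro tendsto_intros) auto
    show "((F \<circ> real_of_ereal) \<longlongrightarrow> 0) (at_left \<infinity>)"
      unfolding ereal_tendsto_simps
    proof (rule tendsto_norm_zero_cancel)
      have "((\<lambda>x::real. exp (- x) / norm c) \<longlongrightarrow> 0 / norm c) at_top"
        using c0 by (intro tendsto_intros filterlim_compose[OF exp_at_bot] filterlim_uminus_at_bot_at_top) simp
      moreover have "norm (F x) = exp (- x) / norm c" for x
        by (simp add: F_def norm_divide norm_exp_eq_Re c_def)
      ultimately show "((\<lambda>x. norm (F x)) \<longlongrightarrow> 0) at_top" by simp
    qed
  qed
  also have "0 - F 0 = 1 / (1 - \<i> * of_real s)"
    using c0 by (simp add: F_def c_def field_simps)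
  finally show ?thesis .
qed

lemma (in prob_space) char_distr_distributed:
  assumes "distributed M lborel X f"
  shows "char (distr M borel X) s = char (density lborel f) s"
proof -
  have [measurable]: "X \<in> borel_measurable M"
    using distributed_measurable[OF assms] by simp
  have "char (distr M borel X) s = expectation (\<lambda>\<omega>. iexp (s * X \<omega>))"
    by (rule char_distr_integral) simp
  also have "\<dots> = (CLINT x|distr M lborel X. iexp (s * x))"
    by (subst integral_distr) auto
  also have "\<dots> = char (density lborel f) s"
    unfolding char_def distributed_distr_eq_density[OF assms] ..
  finally show ?thesis .
qed


lemma gamma_lborel:
  fixes z :: complex
  assumes z: "0 < Re z"
  shows "set_integrable lborel {0<..} (\<lambda>u. of_real u powr (z - 1) / of_real (exp u))"
    "(LINT u:{0<..}|lborel. of_real u powr (z - 1) / of_real (exp u)) = Gamma z"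
proof -
  let ?f = "\<lambda>u::real. of_real u powr (z - 1) / of_real (exp u)"
  have m: "(\<lambda>x. indicat_real {0<..} x *\<^sub>R ?f x) \<in> borel_measurable lborel"
    by (auto intro!: borel_measurable_continuous_on_indicator continuous_intros)
  have "set_integrable lebesgue {0<..} ?f"
    by (rule absolutely_integrable_Gamma_integral'[OF z])
  then show si: "set_integrable lborel {0<..} ?f"
    unfolding set_integrable_def using m by (subst (asm) integrable_completion) auto
  have "(LINT u:{0<..}|lborel. ?f u) = integral {0<..} ?f"
    by (rule set_borel_integral_eq_integral(2)[OF si])
  also have "\<dots> = Gamma z"
    by (rule integral_unique[OF Gamma_integral_complex'[OF z]])
  finally show "(LINT u:{0<..}|lborel. ?f u) = Gamma z" .
qed

lemma std_normal_even: "std_normal_density (- x) = std_normal_density x"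
  by (simp add: std_normal_density_def)

lemma integrable_std_normal: "integrable lborel std_normal_density"
  using integrable_std_normal_moment[of 0] by simp

lemma gamma_integrand_eq:
  fixes t u :: real
  assumes u: "0 < u"
  defines "z \<equiv> (1 + \<i> * of_real t) / 2"
  shows "(1 / sqrt (2 * u)) *\<^sub>R (std_normal_density (sqrt (2 * u)) *\<^sub>R iexp (t * ln \<bar>sqrt (2 * u)\<bar>)) =
      (iexp (t * ln 2 / 2) / (2 * of_real (sqrt pi))) * (of_real u powr (z - 1) / of_real (exp u))"
proof -
  have su: "0 < sqrt u" using u by simp
  have p: "of_real u powr (z - 1) = exp ((z - 1) * of_real (ln u))"
    using u by (simp add: powr_def Ln_of_real)
  have "(z - 1) * of_real (ln u) = of_real (- ln u / 2) + \<i> * of_real (t * ln u / 2)"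
    by (simp add: z_def field_simps)
  then have p2: "of_real u powr (z - 1) = of_real (exp (- ln u / 2)) * iexp (t * ln u / 2)"
    unfolding p by (simp only: exp_add exp_of_real)
  have eu: "exp (- ln u / 2) = 1 / sqrt u"
  proof -
    have "sqrt u = exp (ln u / 2)"
      using u by (simp add: powr_half_sqrt[symmetric] powr_def)
    then show ?thesis by (simp add: exp_minus inverse_eq_divide)
  qed
  have l: "ln \<bar>sqrt (2 * u)\<bar> = ln 2 / 2 + ln u / 2"
    using u by (simp add: ln_sqrt ln_mult)
  have ie: "iexp (t * ln \<bar>sqrt (2 * u)\<bar>) = iexp (t * ln 2 / 2) * iexp (t * ln u / 2)"
    unfolding l by (simp add: distrib_left exp_add[symmetric] field_simps)
  have a: "std_normal_density (sqrt (2*u)) = exp (-u) / sqrt (2*pi)"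
    using u by (simp add: std_normal_density_def)
  have b: "sqrt (2*u) * sqrt (2*pi) = 2 * sqrt u * sqrt pi"
    using u by (simp add: real_sqrt_mult mult_ac)
  have "1 / sqrt (2 * u) * std_normal_density (sqrt (2 * u)) = exp (-u) / (sqrt (2*u) * sqrt (2*pi))"
    unfolding a by simp
  also have "\<dots> = exp (-u) / (2 * sqrt u * sqrt pi)" unfolding b ..
  also have "\<dots> = exp (- ln u / 2) / exp u / (2 * sqrt pi)"
    unfolding eu using su by (simp add: exp_minus field_simps)
  finally have r: "1 / sqrt (2 * u) * std_normal_density (sqrt (2 * u)) = exp (- ln u / 2) / exp u / (2 * sqrt pi)" .
  have "(1 / sqrt (2 * u)) *\<^sub>R (std_normal_density (sqrt (2 * u)) *\<^sub>R iexp (t * ln \<bar>sqrt (2 * u)\<bar>)) =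
      of_real (1 / sqrt (2 * u) * std_normal_density (sqrt (2 * u))) * iexp (t * ln \<bar>sqrt (2 * u)\<bar>)"
    by (simp add: scaleR_conv_of_real)
  also have "\<dots> = of_real (exp (- ln u / 2) / exp u / (2 * sqrt pi)) * (iexp (t * ln 2 / 2) * iexp (t * ln u / 2))"
    unfolding r ie ..
  also have "\<dots> = (iexp (t * ln 2 / 2) / (2 * of_real (sqrt pi))) * (of_real u powr (z - 1) / of_real (exp u))"
    unfolding p2 by (simp add: field_simps)
  finally show ?thesis .
qed


lemma einterval_0_inf: "einterval 0 \<infinity> = {0::real<..}"
  by (auto simp: einterval_def zero_ereal_def)

lemma char_ln_abs_normal_integral:
  fixes t :: real
  shows "(CLINT x|lborel. std_normal_density x *\<^sub>R iexp (t * ln \<bar>x\<bar>)) =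
    iexp (t * ln 2 / 2) * Gamma ((1 + \<i> * of_real t) / 2) / of_real (sqrt pi)"
proof -
  define h where "h x = std_normal_density x *\<^sub>R iexp (t * ln \<bar>x\<bar>)" for x
  define z where "z = (1 + \<i> * of_real t) / 2"
  define K where "K = iexp (t * ln 2 / 2) / (2 * of_real (sqrt pi))"
  define \<Gamma>f where "\<Gamma>f u = of_real u powr (z - 1) / of_real (exp u)" for u :: real
  have Rz: "0 < Re z" by (simp add: z_def)
  have hm[measurable]: "h \<in> borel_measurable lborel" unfolding h_def by measurable
  have nh: "norm (h x) = std_normal_density x" for x
    by (simp add: h_def)
  have hi: "integrable lborel h"
    by (rule Bochner_Integration.integrable_bound[OF integrable_std_normal hm]) (simp add: nh)
  have hev: "h (- x) = h x" for x by (simp add: h_def std_normal_even)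
  have s1: "integral\<^sup>L lborel h = integral\<^sup>L lborel (\<lambda>x. indicator {0<..} x *\<^sub>R h x) + integral\<^sup>L lborel (\<lambda>x. indicator {..<0} x *\<^sub>R h x)"
  proof -
    have "integral\<^sup>L lborel h = integral\<^sup>L lborel (\<lambda>x. indicator {0<..} x *\<^sub>R h x + indicator {..<0} x *\<^sub>R h x)"
    proof (rule integral_cong_AE)
      show "AE x in lborel. h x = indicat_real {0<..} x *\<^sub>R h x + indicat_real {..<0} x *\<^sub>R h x"
        using AE_lborel_singleton[of 0] by eventually_elim (auto split: split_indicator)
    qed auto
    also have "\<dots> = integral\<^sup>L lborel (\<lambda>x. indicator {0<..} x *\<^sub>R h x) + integral\<^sup>L lborel (\<lambda>x. indicator {..<0} x *\<^sub>R h x)"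
      by (rule Bochner_Integration.integral_add) (auto intro!: integrable_mult_indicator hi)
    finally show ?thesis .
  qed
  have s2: "integral\<^sup>L lborel (\<lambda>x. indicator {..<0} x *\<^sub>R h x) = integral\<^sup>L lborel (\<lambda>x. indicator {0<..} x *\<^sub>R h x)"
  proof -
    have "integral\<^sup>L lborel (\<lambda>x. indicator {..<0} x *\<^sub>R h x) =
        \<bar>-1\<bar> *\<^sub>R integral\<^sup>L lborel (\<lambda>x. indicator {..<0} (0 + -1 * x) *\<^sub>R h (0 + -1 * x))"
      by (rule lborel_integral_real_affine) simp
    also have "(\<lambda>x. indicator {..<0} (0 + -1 * x) *\<^sub>R h (0 + -1 * x)) = (\<lambda>x::real. indicator {0<..} x *\<^sub>R h x)"
      by (auto simp: hev split: split_indicator)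
    finally show ?thesis by simp
  qed
  have s3: "integral\<^sup>L lborel (\<lambda>x. indicator {0<..} x *\<^sub>R h x) = (CLBINT x=0..\<infinity>. h x)"
    by (simp add: interval_lebesgue_integral_0_infty set_lebesgue_integral_def)
  have gq: "(1 / sqrt (2 * u)) *\<^sub>R h (sqrt (2 * u)) = K * \<Gamma>f u" if "0 < u" for u
    using gamma_integrand_eq[OF that, of t] by (simp add: h_def K_def \<Gamma>f_def z_def)
  have gi: "set_integrable lborel {0<..} \<Gamma>f"
    unfolding \<Gamma>f_def by (rule gamma_lborel(1)[OF Rz])
  have gI: "(LINT u:{0<..}|lborel. \<Gamma>f u) = Gamma z"
    unfolding \<Gamma>f_def by (rule gamma_lborel(2)[OF Rz])
  have si: "set_integrable lborel {0<..} (\<lambda>u. (1 / sqrt (2 * u)) *\<^sub>R h (sqrt (2 * u)))"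
  proof -
    have "set_integrable lborel {0<..} (\<lambda>u. K * \<Gamma>f u)"
      using gi by (rule set_integrable_mult_right)
    then show ?thesis
      by (subst set_integrable_cong[OF refl refl, where f'="\<lambda>u. K * \<Gamma>f u"]) (auto simp: gq)
  qed
  have s4: "(CLBINT x=0..\<infinity>. h x) = (CLBINT u=0..\<infinity>. (1 / sqrt (2 * u)) *\<^sub>R h (sqrt (2 * u)))"
  proof (rule interval_integral_substitution_integrable)
    show "(0::ereal) < \<infinity>" by simp
    show "DERIV (\<lambda>u. sqrt (2 * u)) x :> 1 / sqrt (2 * x)" if "0 < ereal x" "ereal x < \<infinity>" for x
    proof -
      have x: "0 < x" using that by simp
      show ?thesis using x
        by (auto intro!: derivative_eq_intros simp: field_simps real_sqrt_mult)
    qed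
    show "isCont h (sqrt (2 * x))" if "0 < ereal x" "ereal x < \<infinity>" for x
    proof -
      have x: "0 < x" using that by simp
      then have "sqrt (2 * x) \<noteq> 0" by simp
      then show ?thesis unfolding h_def std_normal_density_def
        by (intro continuous_intros) auto
    qed
    show "isCont (\<lambda>u. 1 / sqrt (2 * u)) x" if "0 < ereal x" "ereal x < \<infinity>" for x
      using that by (intro continuous_intros) auto
    show "0 \<le> 1 / sqrt (2 * x)" if "0 \<le> ereal x" "ereal x \<le> \<infinity>" for x
      using that by simp
    show "((ereal \<circ> (\<lambda>u. sqrt (2 * u)) \<circ> real_of_ereal) \<longlongrightarrow> 0) (at_right 0)"
    proof -
      have "((\<lambda>u. sqrt (2 * u)) \<longlongrightarrow> sqrt (2 * 0)) (at_right (0::real))"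
        by (intro tendsto_intros)
      then show ?thesis
        unfolding zero_ereal_def ereal_tendsto_simps by simp
    qed
    show "((ereal \<circ> (\<lambda>u. sqrt (2 * u)) \<circ> real_of_ereal) \<longlongrightarrow> \<infinity>) (at_left \<infinity>)"
    proof -
      have "filterlim (\<lambda>u::real. sqrt (2 * u)) at_top at_top" by real_asymp
      then show ?thesis unfolding ereal_tendsto_simps by simp
    qed
    show "set_integrable lborel (einterval 0 \<infinity>) (\<lambda>x. (1 / sqrt (2 * x)) *\<^sub>R h (sqrt (2 * x)))"
      unfolding einterval_0_inf by (rule si)
    show "set_integrable lborel (einterval 0 \<infinity>) h"
      unfolding einterval_0_inf set_integrable_def by (rule integrable_mult_indicator) (auto intro: hi)
  qed
  have s5: "(CLBINT u=0..\<infinity>. (1 / sqrt (2 * u)) *\<^sub>R h (sqrt (2 * u))) = K * Gamma z"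
  proof -
    have "(CLBINT u=0..\<infinity>. (1 / sqrt (2 * u)) *\<^sub>R h (sqrt (2 * u))) =
        (LINT u:{0<..}|lborel. (1 / sqrt (2 * u)) *\<^sub>R h (sqrt (2 * u)))"
      by (simp add: interval_lebesgue_integral_0_infty)
    also have "\<dots> = (LINT u:{0<..}|lborel. K * \<Gamma>f u)"
      by (rule set_lebesgue_integral_cong) (auto simp: gq)
    also have "\<dots> = K * Gamma z" by (simp add: gI)
    finally show ?thesis .
  qed
  have "integral\<^sup>L lborel h = 2 * (K * Gamma z)"
    unfolding s1 s2 s3 s4 s5 by simp
  also have "\<dots> = iexp (t * ln 2 / 2) * Gamma ((1 + \<i> * of_real t) / 2) / of_real (sqrt pi)"
    by (simp add: K_def z_def)
  finally show ?thesis unfolding h_def .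
qed


lemma d_bigo: "(\<lambda>j::nat. 1 / (2 * real (Suc j) + 1) - ln (1 + 1 / real (Suc j)) / 2) \<in> O(\<lambda>j. 1 / real j ^ 2)"
  by real_asymp

lemma d_summable: "summable (\<lambda>j. 1 / (2 * real (Suc j) + 1) - ln (1 + 1 / real (Suc j)) / 2)"
  by (rule summable_comparison_test_bigo[OF _ d_bigo]) (simp add: summable_inv_sq)

lemma harm_odd: "harm (2 * n + 1) = 1 + (\<Sum>j<n. 1 / (2 * real (Suc j) + 1)) + harm n / 2"
proof (induction n)
  case 0 then show ?case by (simp add: harm_def)
next
  case (Suc n)
  have "harm (2 * Suc n + 1) = harm (2 * n + 1) + inverse (real (2 * n + 2)) + inverse (real (2 * n + 3))"
    by (simp add: harm_Suc eval_nat_numeral)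
  moreover have "inverse (real (2 * n + 2)) = inverse (real (Suc n)) / 2"
    by (simp add: field_simps)
  moreover have "inverse (real (2 * n + 3)) = 1 / (2 * real (Suc n) + 1)"
    by (simp add: field_simps)
  moreover have "(\<Sum>j<Suc n. 1 / (2 * real (Suc j) + 1)) = (\<Sum>j<n. 1 / (2 * real (Suc j) + 1)) + 1 / (2 * real (Suc n) + 1)"
    by (simp only: sum.lessThan_Suc)
  moreover have "harm (Suc n) = harm n + inverse (real (Suc n))"
    by (simp add: harm_Suc)
  ultimately show ?case using Suc by (simp only:) (simp add: add_divide_distrib)
qed

lemma ln_limit_aux: "(\<lambda>n::nat. ln (real (2 * n + 1)) - ln (real n) / 2 - ln (real (Suc n)) / 2) \<longlonglongrightarrow> ln 2"
  by real_asymp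

lemma d_sum: "(\<Sum>j. 1 / (2 * real (Suc j) + 1) - ln (1 + 1 / real (Suc j)) / 2) = ln 2 + euler_mascheroni / 2 - 1"
proof -
  define d where "d j = 1 / (2 * real (Suc j) + 1) - ln (1 + 1 / real (Suc j)) / 2" for j
  have ps: "(\<Sum>j<n. d j) = (harm (2 * n + 1) - ln (real (2 * n + 1))) - (harm n - ln (real n)) / 2
      + (ln (real (2 * n + 1)) - ln (real n) / 2 - ln (real (Suc n)) / 2) - 1" for n
  proof -
    have "(\<Sum>j<n. d j) = (\<Sum>j<n. 1 / (2 * real (Suc j) + 1)) - (\<Sum>j<n. ln (1 + 1 / real (Suc j))) / 2"
      by (simp add: d_def sum_subtractf sum_divide_distrib)
    then show ?thesis using harm_odd[of n] sum_ln_telescope[of n] by (simp add: algebra_simps diff_divide_distrib)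
  qed
  have sm: "strict_mono (\<lambda>n::nat. 2 * n + 1)" by (rule strict_monoI) simp
  have h1: "(\<lambda>n. harm (2 * n + 1) - ln (real (2 * n + 1))) \<longlonglongrightarrow> euler_mascheroni"
    using LIMSEQ_subseq_LIMSEQ[OF euler_mascheroni_LIMSEQ sm] by (simp add: o_def)
  have "(\<lambda>n. \<Sum>j<n. d j) \<longlonglongrightarrow> euler_mascheroni - euler_mascheroni / 2 + ln 2 - 1"
    unfolding ps by (intro tendsto_intros h1 euler_mascheroni_LIMSEQ ln_limit_aux) simp
  then have "d sums (ln 2 + euler_mascheroni / 2 - 1)"
    unfolding sums_def by (simp add: algebra_simps)
  then show ?thesis unfolding d_def by (rule sums_unique[symmetric])
qed

lemma (in prob_space) exp_facts:
  assumes D: "distributed M lborel X (\<lambda>x. ennreal (exponential_density 1 x))"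
  shows "AE \<omega> in M. 0 \<le> X \<omega>" "integrable M X" "integrable M (\<lambda>\<omega>. (X \<omega>)\<^sup>2)"
    "expectation X = 1" "expectation (\<lambda>\<omega>. (X \<omega> - 1)\<^sup>2) = 1"
proof -
  have [measurable]: "X \<in> measurable M lborel" using distributed_measurable[OF D] .
  have [measurable]: "X \<in> borel_measurable M" using distributed_measurable[OF D] by simp
  have "AE x in distr M lborel X. 0 \<le> x"
    unfolding distributed_distr_eq_density[OF D]
    by (subst AE_density) (auto simp: exponential_density_def)
  then show "AE \<omega> in M. 0 \<le> X \<omega>" by (rule AE_distrD[rotated]) simp
  show "integrable M X" using erlang_ith_moment_integrable[OF _ D, of 1] by simp
  show "integrable M (\<lambda>\<omega>. (X \<omega>)\<^sup>2)" using erlang_ith_moment_integrable[OF _ D, of 2] by simp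
  show E1: "expectation X = 1" using exponential_distributed_expectation[OF _ D] by simp
  show "expectation (\<lambda>\<omega>. (X \<omega> - 1)\<^sup>2) = 1"
    using exponential_distributed_variance[OF _ D] E1 by simp
qed


definition phi :: "real \<Rightarrow> complex" where
  "phi t = iexp (t * ln 2 / 2) * Gamma ((1 + \<i> * of_real t) / 2) / of_real (sqrt pi)"

lemma (in prob_space) char_ln_abs:
  assumes D: "distributed M lborel Z (\<lambda>x. ennreal (std_normal_density x))"
  shows "char (distr M borel (\<lambda>\<omega>. ln \<bar>Z \<omega>\<bar>)) t = phi t"
proof -
  have [measurable]: "Z \<in> measurable M lborel" using distributed_measurable[OF D] .
  have [measurable]: "Z \<in> borel_measurable M" using distributed_measurable[OF D] by simp
  have "char (distr M borel (\<lambda>\<omega>. ln \<bar>Z \<omega>\<bar>)) t = expectation (\<lambda>\<omega>. iexp (t * ln \<bar>Z \<omega>\<bar>))"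
    by (rule char_distr_integral) measurable
  also have "\<dots> = (CLINT x|distr M lborel Z. iexp (t * ln \<bar>x\<bar>))"
    by (subst integral_distr) auto
  also have "\<dots> = (CLINT x|density lborel (\<lambda>x. ennreal (std_normal_density x)). iexp (t * ln \<bar>x\<bar>))"
    unfolding distributed_distr_eq_density[OF D] ..
  also have "\<dots> = (CLINT x|lborel. std_normal_density x *\<^sub>R iexp (t * ln \<bar>x\<bar>))"
    by (rule integral_density) auto
  also have "\<dots> = phi t"
    unfolding phi_def by (rule char_ln_abs_normal_integral)
  finally show ?thesis .
qed

context prob_space begin

lemma exp_series_facts:
  fixes E :: "nat \<Rightarrow> 'a \<Rightarrow> real"
  assumes ind: "indep_vars (\<lambda>_. borel) E UNIV"
    and D: "\<And>j. distributed M lborel (E j) (\<lambda>x. ennreal (exponential_density 1 x))"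
  shows "AE \<omega> in M. summable (\<lambda>j. (E (Suc j) \<omega> - 1) / (2 * real (Suc j) + 1))"
    "AE \<omega> in M. summable (\<lambda>j. E (Suc j) \<omega> / (2 * real (Suc j) + 1) - ln (1 + 1 / real (Suc j)) / 2)"
proof -
  have "AE \<omega> in M. summable (\<lambda>j. (E j \<omega> - 1) / (2 * real j + 1))"
    by (rule as_summable[OF ind]) (auto intro: exp_facts[OF D])
  then show s1: "AE \<omega> in M. summable (\<lambda>j. (E (Suc j) \<omega> - 1) / (2 * real (Suc j) + 1))"
  proof eventually_elim
    case (elim \<omega>)
    then show ?case
      using summable_Suc_iff[where f="\<lambda>j. (E j \<omega> - 1) / (2 * real j + 1)"] by simp
  qed
  show "AE \<omega> in M. summable (\<lambda>j. E (Suc j) \<omega> / (2 * real (Suc j) + 1) - ln (1 + 1 / real (Suc j)) / 2)"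
    using s1
  proof eventually_elim
    case (elim \<omega>)
    have "summable (\<lambda>j. (E (Suc j) \<omega> - 1) / (2 * real (Suc j) + 1) + (1 / (2 * real (Suc j) + 1) - ln (1 + 1 / real (Suc j)) / 2))"
      by (rule summable_add[OF elim d_summable])
    then show ?case by (simp add: diff_divide_distrib)
  qed
qed

lemma char_Y1:
  fixes E :: "nat \<Rightarrow> 'a \<Rightarrow> real"
  assumes ind: "indep_vars (\<lambda>_. borel) E UNIV"
    and D: "\<And>j. distributed M lborel (E j) (\<lambda>x. ennreal (exponential_density 1 x))"
  shows "char (distr M borel (\<lambda>\<omega>. ln 2 / 2 - E 0 \<omega>
            - (\<Sum>j. E (Suc j) \<omega> / (2 * real (Suc j) + 1) - ln (1 + 1 / real (Suc j)) / 2))) t = phi t"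
proof -
  have L1: "(\<lambda>n. iexp (t * (ln 2 / 2 + (\<Sum>j<n. ln (1 + 1 / real (Suc j)) / 2))) *
      (\<Prod>k<Suc n. char (distr M borel (E k)) (- t / (2 * real k + 1))))
      \<longlonglongrightarrow> char (distr M borel (\<lambda>\<omega>. ln 2 / 2 - E 0 \<omega>
            - (\<Sum>j. E (Suc j) \<omega> / (2 * real (Suc j) + 1) - ln (1 + 1 / real (Suc j)) / 2))) t"
    by (rule char_series[OF ind exp_series_facts(2)[OF ind D]])
  have ch: "char (distr M borel (E k)) (- t / (2 * real k + 1)) = 1 / (1 + \<i> * of_real (t / (2 * real k + 1)))" for k
    unfolding char_distr_distributed[OF D] char_exponential by simp
  have L2: "(\<lambda>n. iexp (t * (ln 2 / 2 + (\<Sum>j<n. ln (1 + 1 / real (Suc j)) / 2))) *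
      (\<Prod>k<Suc n. char (distr M borel (E k)) (- t / (2 * real k + 1)))) \<longlonglongrightarrow> phi t"
    unfolding ch phi_def by (rule gamma_prod_limit)
  show ?thesis by (rule LIMSEQ_unique[OF L1 L2])
qed

lemma Y1_Y2_AE:
  fixes E :: "nat \<Rightarrow> 'a \<Rightarrow> real"
  assumes ind: "indep_vars (\<lambda>_. borel) E UNIV"
    and D: "\<And>j. distributed M lborel (E j) (\<lambda>x. ennreal (exponential_density 1 x))"
  shows "AE \<omega> in M. ln 2 / 2 - E 0 \<omega>
            - (\<Sum>j. E (Suc j) \<omega> / (2 * real (Suc j) + 1) - ln (1 + 1 / real (Suc j)) / 2) =
         - (euler_mascheroni + ln 2) / 2 - (E 0 \<omega> - 1)
            - (\<Sum>j. (E (Suc j) \<omega> - 1) / (2 * real (Suc j) + 1))"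
  using exp_series_facts(1)[OF ind D]
proof eventually_elim
  case (elim \<omega>)
  have "(\<Sum>j. E (Suc j) \<omega> / (2 * real (Suc j) + 1) - ln (1 + 1 / real (Suc j)) / 2) =
      (\<Sum>j. (E (Suc j) \<omega> - 1) / (2 * real (Suc j) + 1) + (1 / (2 * real (Suc j) + 1) - ln (1 + 1 / real (Suc j)) / 2))"
    by (simp add: diff_divide_distrib)
  also have "\<dots> = (\<Sum>j. (E (Suc j) \<omega> - 1) / (2 * real (Suc j) + 1)) + (\<Sum>j. 1 / (2 * real (Suc j) + 1) - ln (1 + 1 / real (Suc j)) / 2)"
    by (rule suminf_add[OF elim d_summable, symmetric])
  finally show ?case unfolding d_sum by simp
qed

end


lemma char_convolution:
  fixes \<mu> \<nu> :: "real measure"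
  assumes P: "prob_space \<mu>" "prob_space \<nu>" and S[measurable_cong]: "sets \<mu> = sets borel" "sets \<nu> = sets borel"
  shows "char (\<mu> \<star> \<nu>) t = char \<mu> t * char \<nu> t"
    "prob_space (\<mu> \<star> \<nu>)"
proof -
  interpret \<mu>: prob_space \<mu> by fact
  interpret \<nu>: prob_space \<nu> by fact
  interpret pair_prob_space \<mu> \<nu> ..
  have m[measurable]: "(\<lambda>(x, y). x + y :: real) \<in> measurable (\<mu> \<Otimes>\<^sub>M \<nu>) borel" by measurable
  show "prob_space (\<mu> \<star> \<nu>)" unfolding convolution_def
    by (rule prob_space_distr) (rule m)
  have int: "integrable (\<mu> \<Otimes>\<^sub>M \<nu>) (\<lambda>p. iexp (t * (fst p + snd p)))"
    by (rule integrable_const_bound[where B=1]) auto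
  have "char (\<mu> \<star> \<nu>) t = (CLINT p|\<mu> \<Otimes>\<^sub>M \<nu>. iexp (t * (fst p + snd p)))"
    unfolding char_def convolution_def by (subst integral_distr) (auto simp: case_prod_beta)
  also have "\<dots> = (CLINT x|\<mu>. (CLINT y|\<nu>. iexp (t * (fst (x,y) + snd (x,y)))))"
    by (rule integral_fst'[OF int, symmetric])
  also have "\<dots> = (CLINT x|\<mu>. iexp (t * x) * char \<nu> t)"
  proof (rule Bochner_Integration.integral_cong[OF refl])
    fix x
    have "(CLINT y|\<nu>. iexp (t * (fst (x,y) + snd (x,y)))) = (CLINT y|\<nu>. iexp (t * x) * iexp (t * y))"
      by (simp add: distrib_left exp_add)
    also have "\<dots> = iexp (t * x) * char \<nu> t"
      unfolding char_def by simp
    finally show "(CLINT y|\<nu>. iexp (t * (fst (x,y) + snd (x,y)))) = iexp (t * x) * char \<nu> t" .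
  qed
  also have "\<dots> = char \<mu> t * char \<nu> t"
    unfolding char_def by simp
  finally show "char (\<mu> \<star> \<nu>) t = char \<mu> t * char \<nu> t" .
qed

lemma conv_pow_facts:
  fixes \<nu> :: "real measure"
  assumes P: "prob_space \<nu>" and S: "sets \<nu> = sets borel"
  shows "prob_space (conv_pow \<nu> n) \<and> sets (conv_pow \<nu> n) = sets borel \<and> char (conv_pow \<nu> n) t = char \<nu> t ^ n"
proof (induction n)
  case 0
  have "char (return borel 0) t = 1"
    unfolding char_def by (subst integral_return) auto
  then show ?case by (simp add: prob_space_return)
next
  case (Suc n)
  then have IH: "prob_space (conv_pow \<nu> n)" "sets (conv_pow \<nu> n) = sets borel" "char (conv_pow \<nu> n) t = char \<nu> t ^ n"
    by auto
  show ?case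
    using char_convolution[OF P IH(1) S IH(2)] IH(3) by simp
qed


definition gdens :: "real \<Rightarrow> real \<Rightarrow> real" where
  "gdens a x = (if 0 < x then x powr (a - 1) * exp (- x) / Gamma a else 0)"

lemma gdens_measurable[measurable]: "gdens a \<in> borel_measurable borel"
  unfolding gdens_def by measurable

lemma gdens_nonneg: "0 < a \<Longrightarrow> 0 \<le> gdens a x"
  by (simp add: gdens_def Gamma_real_pos less_imp_le)

lemma gdens_moment_nn:
  assumes a: "0 < a"
  shows "(\<integral>\<^sup>+x. ennreal (gdens a x * x ^ k) \<partial>lborel) = ennreal (Gamma (a + real k) / Gamma a)"
proof -
  have Ga: "0 < Gamma a" using a by (rule Gamma_real_pos)
  have eq: "gdens a x * x ^ k = (indicator {0..} x * x powr (a + real k - 1) / exp x) * (1 / Gamma a)" for x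
  proof (cases "0 < x")
    case True
    have "x powr (a - 1) * x ^ k = x powr (a + real k - 1)"
      using True by (simp add: powr_realpow[symmetric] powr_add[symmetric] algebra_simps)
    then show ?thesis using True
      by (simp add: gdens_def exp_minus field_simps)
  next
    case False
    then show ?thesis by (cases "x = 0") (auto simp: gdens_def indicator_def)
  qed
  have "(\<integral>\<^sup>+x. ennreal (gdens a x * x ^ k) \<partial>lborel) =
      (\<integral>\<^sup>+x. ennreal (indicator {0..} x * x powr (a + real k - 1) / exp x) * ennreal (1 / Gamma a) \<partial>lborel)"
    unfolding eq using Ga
    by (intro nn_integral_cong ennreal_mult'') simp
  also have "\<dots> = (\<integral>\<^sup>+x. ennreal (indicator {0..} x * x powr (a + real k - 1) / exp x) \<partial>lborel) * ennreal (1 / Gamma a)"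
    by (rule nn_integral_multc) measurable
  also have "\<dots> = ennreal (Gamma (a + real k)) * ennreal (1 / Gamma a)"
    using Gamma_conv_nn_integral_real[of "a + real k"] a by simp
  also have "\<dots> = ennreal (Gamma (a + real k) / Gamma a)"
    using Ga by (simp add: ennreal_mult''[symmetric] divide_inverse)
  finally show ?thesis .
qed

lemma gdens_prob: assumes a: "0 < a" shows "prob_space (density lborel (gdens a))"
proof (rule prob_spaceI)
  have "emeasure (density lborel (gdens a)) (space (density lborel (gdens a))) = (\<integral>\<^sup>+x. ennreal (gdens a x * x ^ 0) \<partial>lborel)"
    by (simp add: emeasure_density)
  also have "\<dots> = 1" unfolding gdens_moment_nn[OF a] using Gamma_real_pos[OF a] by simp
  finally show "emeasure (density lborel (gdens a)) (space (density lborel (gdens a))) = 1" .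
qed

lemma gdens_moments:
  assumes a: "0 < a"
  shows "integrable (density lborel (gdens a)) (\<lambda>x. x ^ k)"
    "integral\<^sup>L (density lborel (gdens a)) (\<lambda>x. x ^ k) = Gamma (a + real k) / Gamma a"
proof -
  have hb: "has_bochner_integral lborel (\<lambda>x. gdens a x * x ^ k) (Gamma (a + real k) / Gamma a)"
  proof (rule has_bochner_integral_nn_integral)
    show "AE x in lborel. 0 \<le> gdens a x * x ^ k"
      by (intro AE_I2) (simp add: gdens_def Gamma_real_pos[OF a] less_imp_le)
    show "0 \<le> Gamma (a + real k) / Gamma a"
      using a by (simp add: Gamma_real_pos less_imp_le)
  qed (simp_all add: gdens_moment_nn[OF a])
  have "integrable lborel (\<lambda>x. gdens a x *\<^sub>R x ^ k)" using hb by (simp add: integrable.intros)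
  then show "integrable (density lborel (gdens a)) (\<lambda>x. x ^ k)"
    by (subst integrable_density) (auto simp: gdens_nonneg[OF a])
  have "integral\<^sup>L (density lborel (gdens a)) (\<lambda>x. x ^ k) = integral\<^sup>L lborel (\<lambda>x. gdens a x *\<^sub>R x ^ k)"
    by (rule integral_density) (auto simp: gdens_nonneg[OF a])
  also have "\<dots> = Gamma (a + real k) / Gamma a"
    using hb by (simp add: has_bochner_integral_integral_eq)
  finally show "integral\<^sup>L (density lborel (gdens a)) (\<lambda>x. x ^ k) = Gamma (a + real k) / Gamma a" .
qed

lemma gdens_one: "density lborel (gdens 1) = density lborel (exponential_density 1)"
proof (rule density_cong)
  show "AE x in lborel. ennreal (gdens 1 x) = ennreal (exponential_density 1 x)"
    using AE_lborel_singleton[of 0]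
    by eventually_elim (auto simp: gdens_def exponential_density_def)
qed (auto simp: borel_measurable_erlang_density)


lemma gdens_conv_pointwise:
  assumes a: "0 < a" and b: "0 < b"
  shows "(\<integral>\<^sup>+y. ennreal (gdens a (x - y)) * ennreal (gdens b y) \<partial>lborel) = ennreal (gdens (a + b) x)"
proof (cases "0 < x")
  case False
  have z: "ennreal (gdens a (x - y)) * ennreal (gdens b y) = 0" for y
    using False by (cases "0 < y") (auto simp: gdens_def)
  have "(\<integral>\<^sup>+y. ennreal (gdens a (x - y)) * ennreal (gdens b y) \<partial>lborel) = 0"
    by (simp only: z) simp
  then show ?thesis using False by (simp add: gdens_def)
next
  case x: True
  have Ga: "0 < Gamma a" using a by (rule Gamma_real_pos)
  have Gb: "0 < Gamma b" using b by (rule Gamma_real_pos)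
  define C where "C = x powr (a + b - 2) * exp (- x) / (Gamma a * Gamma b)"
  define G where "G s = indicator {0..1} s * (s powr (b - 1) * (1 - s) powr (a - 1))" for s :: real
  have C0: "0 \<le> C" using Ga Gb by (simp add: C_def)
  have G0: "0 \<le> G s" for s by (simp add: G_def)
  have pt: "ennreal (gdens a (x - (0 + x * s))) * ennreal (gdens b (0 + x * s)) = ennreal C * ennreal (G s)" for s
  proof -
    consider "s \<le> 0" | "0 < s" "s < 1" | "1 \<le> s" by linarith
    then show ?thesis
    proof cases
      case 1
      then have "\<not> 0 < x * s" using x by (simp add: mult_le_0_iff not_less)
      moreover have "G s = 0" using 1 by (cases "s = 0") (auto simp: G_def)
      ultimately show ?thesis by (simp add: gdens_def)
    next
      case 2
      have p1: "(x * (1 - s)) powr (a - 1) = x powr (a - 1) * (1 - s) powr (a - 1)"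
        using 2 x by (simp add: powr_mult)
      have p2: "(x * s) powr (b - 1) = x powr (b - 1) * s powr (b - 1)"
        using 2 x by (simp add: powr_mult)
      have p3: "x powr (a - 1) * x powr (b - 1) = x powr (a + b - 2)"
        using x by (simp add: powr_add[symmetric])
      have e: "exp (- (x * (1 - s))) * exp (- (x * s)) = exp (- x)"
        by (simp add: exp_add[symmetric] algebra_simps)
      have "gdens a (x - x * s) * gdens b (x * s) = C * G s"
      proof -
        have "x - x * s = x * (1 - s)" by (simp add: algebra_simps)
        moreover have "0 < x * (1 - s)" "0 < x * s" using 2 x by auto
        ultimately have "gdens a (x - x * s) * gdens b (x * s) =
            ((x * (1 - s)) powr (a - 1) * exp (- (x * (1 - s))) / Gamma a) * ((x * s) powr (b - 1) * exp (- (x * s)) / Gamma b)"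
          by (simp add: gdens_def)
        also have "\<dots> = (x powr (a - 1) * x powr (b - 1)) * (exp (- (x * (1 - s))) * exp (- (x * s))) * ((1 - s) powr (a - 1) * s powr (b - 1)) / (Gamma a * Gamma b)"
          unfolding p1 p2 by (simp add: field_simps)
        also have "\<dots> = C * G s"
          unfolding p3 e using 2 by (simp add: C_def G_def field_simps)
        finally show ?thesis .
      qed
      then show ?thesis
        using C0 G0 by (simp add: ennreal_mult[symmetric] gdens_nonneg a b)
    next
      case 3
      then have "\<not> 0 < x - x * s" using x
        by (simp add: not_less algebra_simps)
      moreover have "G s = 0" using 3 by (cases "s = 1") (auto simp: G_def)
      ultimately show ?thesis by (simp add: gdens_def)
    qed
  qed
  have "(\<integral>\<^sup>+y. ennreal (gdens a (x - y)) * ennreal (gdens b y) \<partial>lborel) =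
      ennreal \<bar>x\<bar> * (\<integral>\<^sup>+s. ennreal (gdens a (x - (0 + x * s))) * ennreal (gdens b (0 + x * s)) \<partial>lborel)"
    by (rule nn_integral_real_affine) (use x in auto)
  also have "(\<integral>\<^sup>+s. ennreal (gdens a (x - (0 + x * s))) * ennreal (gdens b (0 + x * s)) \<partial>lborel) =
      (\<integral>\<^sup>+s. ennreal C * ennreal (G s) \<partial>lborel)"
    by (simp only: pt)
  also have "\<dots> = ennreal C * (\<integral>\<^sup>+s. ennreal (G s) \<partial>lborel)"
    by (rule nn_integral_cmult) (simp add: G_def)
  also have "(\<integral>\<^sup>+s. ennreal (G s) \<partial>lborel) = ennreal (Beta b a)"
  proof -
    have "integral\<^sup>N lborel (\<lambda>s. indicator {0..1} s * (s powr (b - 1) * (1 - s) powr (a - 1))) = ennreal (Beta b a)"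
      by (rule nn_integral_has_integral_lebesgue[OF _ has_integral_Beta_real[OF b a]]) auto
    then show ?thesis by (simp add: G_def)
  qed
  also have "ennreal \<bar>x\<bar> * (ennreal C * ennreal (Beta b a)) = ennreal (x * C * Beta b a)"
    using x C0 Ga Gb by (simp add: ennreal_mult[symmetric] Beta_def mult_ac Gamma_real_pos a b add_pos_pos)
  also have "x * C * Beta b a = gdens (a + b) x"
  proof -
    have "x powr (a + b - 1) = x powr ((a + b - 2) + 1)" by (simp add: algebra_simps)
    also have "\<dots> = x powr (a + b - 2) * x powr 1" by (rule powr_add)
    also have "\<dots> = x * x powr (a + b - 2)" using x by simp
    finally have "x * x powr (a + b - 2) = x powr (a + b - 1)" ..
    then show ?thesis using x Ga Gb
      by (simp add: C_def Beta_def gdens_def field_simps add.commute)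
  qed
  finally show ?thesis .
qed

lemma gdens_conv:
  assumes a: "0 < a" and b: "0 < b"
  shows "density lborel (gdens a) \<star> density lborel (gdens b) = density lborel (gdens (a + b))"
proof -
  have "density lborel (\<lambda>x. ennreal (gdens a x)) \<star> density lborel (\<lambda>x. ennreal (gdens b x)) =
      density lborel (\<lambda>x. \<integral>\<^sup>+y. ennreal (gdens a (x - y)) * ennreal (gdens b y) \<partial>lborel)"
  proof (rule convolution_density)
    show "finite_measure (density lborel (\<lambda>x. ennreal (gdens a x)))"
      by (rule prob_space.axioms(1)[OF gdens_prob[OF a]])
    show "finite_measure (density lborel (\<lambda>x. ennreal (gdens b x)))"
      by (rule prob_space.axioms(1)[OF gdens_prob[OF b]])
  qed auto
  also have "(\<lambda>x. \<integral>\<^sup>+y. ennreal (gdens a (x - y)) * ennreal (gdens b y) \<partial>lborel) = (\<lambda>x. ennreal (gdens (a + b) x))"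
    by (rule ext) (rule gdens_conv_pointwise[OF a b])
  finally show ?thesis .
qed

lemma char_gdens_mult:
  assumes a: "0 < a" and m: "1 \<le> m"
  shows "char (density lborel (gdens (real m * a))) t = char (density lborel (gdens a)) t ^ m"
  using m
proof (induction m rule: dec_induct)
  case base then show ?case by simp
next
  case (step m)
  have ma: "0 < real m * a" using step(1) a by simp
  have "real (Suc m) * a = real m * a + a" by (simp add: algebra_simps)
  then have "char (density lborel (gdens (real (Suc m) * a))) t =
      char (density lborel (gdens (real m * a)) \<star> density lborel (gdens a)) t"
    by (simp add: gdens_conv[OF ma a])
  also have "\<dots> = char (density lborel (gdens (real m * a))) t * char (density lborel (gdens a)) t"
    by (rule char_convolution(1)[OF gdens_prob[OF ma] gdens_prob[OF a]]) auto
  finally show ?case using step(3) by simp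
qed

lemma char_gdens_root:
  assumes n: "1 \<le> n"
  shows "char (density lborel (gdens (1 / real n))) t ^ n = char (density lborel (exponential_density 1)) t"
proof -
  have "char (density lborel (gdens (real n * (1 / real n)))) t = char (density lborel (gdens (1 / real n))) t ^ n"
    by (rule char_gdens_mult) (use n in auto)
  moreover have "real n * (1 / real n) = 1" using n by simp
  ultimately show ?thesis by (simp add: gdens_one)
qed


lemma iid_product:
  fixes \<rho> :: "real measure"
  assumes Pr: "prob_space \<rho>" and S: "sets \<rho> = sets borel"
  shows "prob_space (PiM (UNIV :: nat set) (\<lambda>_. \<rho>))"
    "prob_space.indep_vars (PiM (UNIV :: nat set) (\<lambda>_. \<rho>)) (\<lambda>_. borel) (\<lambda>k \<omega>. \<omega> k) UNIV"
    "\<And>k. distr (PiM (UNIV :: nat set) (\<lambda>_. \<rho>)) borel (\<lambda>\<omega>. \<omega> k) = \<rho>"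
proof -
  define Q where "Q = PiM (UNIV :: nat set) (\<lambda>_. \<rho>)"
  have PP: "prob_space Q" unfolding Q_def by (rule prob_space_PiM) (rule Pr)
  then show "prob_space (PiM (UNIV :: nat set) (\<lambda>_. \<rho>))" by (simp add: Q_def)
  have rv: "(\<lambda>\<omega>. \<omega> k) \<in> measurable Q borel" for k
  proof -
    have "(\<lambda>\<omega>. \<omega> k) \<in> measurable Q \<rho>"
      unfolding Q_def by (rule measurable_component_singleton) simp
    then show ?thesis using measurable_cong_sets[OF refl S, of Q] by simp
  qed
  have D: "distr Q borel (\<lambda>\<omega>. \<omega> k) = \<rho>" for k
  proof -
    have "distr Q borel (\<lambda>\<omega>. \<omega> k) = distr Q \<rho> (\<lambda>\<omega>. \<omega> k)"
      by (rule distr_cong) (simp_all add: S)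
    also have "\<dots> = \<rho>" unfolding Q_def
      by (rule distr_PiM_component[where M="\<lambda>_. \<rho>"]) (simp_all add: Pr)
    finally show ?thesis .
  qed
  then show "\<And>k. distr (PiM (UNIV :: nat set) (\<lambda>_. \<rho>)) borel (\<lambda>\<omega>. \<omega> k) = \<rho>"
    by (simp add: Q_def)
  have sets_eq: "sets (PiM (UNIV :: nat set) (\<lambda>_. borel)) = sets Q"
    unfolding Q_def by (rule sets_PiM_cong) (simp_all add: S)
  have L: "distr Q (PiM UNIV (\<lambda>_. borel)) (\<lambda>x. \<lambda>i\<in>UNIV. x i) = Q"
  proof -
    have "distr Q (PiM UNIV (\<lambda>_. borel)) (\<lambda>x. \<lambda>i\<in>UNIV. x i) = distr Q Q (\<lambda>x. x)"
      by (rule distr_cong[OF refl sets_eq]) (simp add: restrict_UNIV)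
    then show ?thesis by simp
  qed
  have R: "PiM UNIV (\<lambda>i. distr Q borel (\<lambda>\<omega>. \<omega> i)) = Q"
    unfolding D by (simp add: Q_def)
  have "prob_space.indep_vars Q (\<lambda>_. borel) (\<lambda>k \<omega>. \<omega> k) UNIV"
    by (subst prob_space.indep_vars_iff_distr_eq_PiM[OF PP UNIV_not_empty rv]) (simp only: L R)
  then show "prob_space.indep_vars (PiM (UNIV :: nat set) (\<lambda>_. \<rho>)) (\<lambda>_. borel) (\<lambda>k \<omega>. \<omega> k) UNIV"
    by (simp add: Q_def)
qed


lemma inf_div_root:
  assumes n: "1 \<le> n"
  shows "\<exists>\<nu>. prob_space \<nu> \<and> sets \<nu> = sets borel \<and> (\<forall>t. char \<nu> t ^ n = phi t)"
proof -
  define a where "a = 1 / real n"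
  have a: "0 < a" using n by (simp add: a_def)
  have na: "real n * a = 1" using n by (simp add: a_def)
  define \<rho> where "\<rho> = density lborel (gdens a)"
  have Pr: "prob_space \<rho>" unfolding \<rho>_def by (rule gdens_prob[OF a])
  have S: "sets \<rho> = sets borel" by (simp add: \<rho>_def)
  define Q where "Q = PiM (UNIV :: nat set) (\<lambda>_. \<rho>)"
  note iid = iid_product[OF Pr S, folded Q_def]
  interpret Q: prob_space Q by (rule iid(1))
  have ind: "Q.indep_vars (\<lambda>_. borel) (\<lambda>k \<omega>. \<omega> k) UNIV" by (rule iid(2))
  have distrX: "distr Q borel (\<lambda>\<omega>. \<omega> k) = \<rho>" for k by (rule iid(3))
  have rvX[measurable]: "(\<lambda>\<omega>. \<omega> k) \<in> borel_measurable Q" for k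
    using ind unfolding Q.indep_vars_def by auto
  have intk: "integrable Q (\<lambda>\<omega>. (\<omega> k) ^ i)" for k i
  proof -
    have "integrable (distr Q borel (\<lambda>\<omega>. \<omega> k)) (\<lambda>x. x ^ i)"
      unfolding distrX \<rho>_def by (rule gdens_moments(1)[OF a])
    then show ?thesis by (subst (asm) integrable_distr_eq) auto
  qed
  have Ek: "Q.expectation (\<lambda>\<omega>. (\<omega> k) ^ i) = Gamma (a + real i) / Gamma a" for k i
  proof -
    have "Q.expectation (\<lambda>\<omega>. (\<omega> k) ^ i) = integral\<^sup>L (distr Q borel (\<lambda>\<omega>. \<omega> k)) (\<lambda>x. x ^ i)"
      by (subst integral_distr) auto
    also have "\<dots> = Gamma (a + real i) / Gamma a"
      unfolding distrX \<rho>_def by (rule gdens_moments(2)[OF a])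
    finally show ?thesis .
  qed
  have Ga: "0 < Gamma a" using a by (rule Gamma_real_pos)
  have g1: "Gamma (a + 1) = a * Gamma a" using a by (intro Gamma_plus1) (auto dest: nonpos_Ints_nonpos)
  have "Gamma (a + 1 + 1) = (a + 1) * Gamma (a + 1)" using a by (intro Gamma_plus1) (auto dest: nonpos_Ints_nonpos)
  then have g2: "Gamma (a + 2) = (a + 1) * (a * Gamma a)"
    using g1 by (simp add: add.assoc)
  have E1: "Q.expectation (\<lambda>\<omega>. \<omega> k) = a" for k
    using Ek[of k 1] g1 Ga by simp
  have E2: "Q.expectation (\<lambda>\<omega>. (\<omega> k)\<^sup>2) = a * (a + 1)" for k
    using Ek[of k 2] g2 Ga by simp
  have int1: "integrable Q (\<lambda>\<omega>. \<omega> k)" for k using intk[of k 1] by simp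
  have int2: "integrable Q (\<lambda>\<omega>. (\<omega> k)\<^sup>2)" for k using intk[of k 2] by simp
  have V: "Q.expectation (\<lambda>\<omega>. (\<omega> k - a)\<^sup>2) = a" for k
  proof -
    have "(\<lambda>\<omega>. (\<omega> k - a)\<^sup>2) = (\<lambda>\<omega>. ((\<omega> k)\<^sup>2 - 2 * a * \<omega> k) + a\<^sup>2)"
      by (auto simp: power2_eq_square algebra_simps)
    then have "Q.expectation (\<lambda>\<omega>. (\<omega> k - a)\<^sup>2) = (Q.expectation (\<lambda>\<omega>. (\<omega> k)\<^sup>2) - 2 * a * Q.expectation (\<lambda>\<omega>. \<omega> k)) + a\<^sup>2"
      using int1[of k] int2[of k] by (simp add: Q.prob_space)
    then show ?thesis unfolding E1 E2 by (simp add: power2_eq_square algebra_simps)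
  qed
  have nnk: "AE \<omega> in Q. 0 \<le> \<omega> k" for k
  proof -
    have "AE x in \<rho>. 0 \<le> x"
      unfolding \<rho>_def by (subst AE_density) (auto simp: gdens_def)
    then have "AE x in distr Q borel (\<lambda>\<omega>. \<omega> k). 0 \<le> x" unfolding distrX .
    then show ?thesis by (rule AE_distrD[rotated]) simp
  qed
  have s1: "AE \<omega> in Q. summable (\<lambda>j. (\<omega> j - a) / (2 * real j + 1))"
    by (rule Q.as_summable[OF ind nnk int1 int2 E1 V])
  have s2: "AE \<omega> in Q. summable (\<lambda>j. \<omega> (Suc j) / (2 * real (Suc j) + 1) - a * ln (1 + 1 / real (Suc j)) / 2)"
    using s1
  proof eventually_elim
    case (elim \<omega>)
    then have "summable (\<lambda>j. (\<omega> (Suc j) - a) / (2 * real (Suc j) + 1))"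
      using summable_Suc_iff[where f="\<lambda>j. (\<omega> j - a) / (2 * real j + 1)"] by simp
    then have "summable (\<lambda>j. (\<omega> (Suc j) - a) / (2 * real (Suc j) + 1) + a * (1 / (2 * real (Suc j) + 1) - ln (1 + 1 / real (Suc j)) / 2))"
      by (intro summable_add summable_mult d_summable)
    then show ?case by (simp add: diff_divide_distrib algebra_simps)
  qed
  define W where "W \<omega> = a * ln 2 / 2 - \<omega> 0 - (\<Sum>j. \<omega> (Suc j) / (2 * real (Suc j) + 1) - a * ln (1 + 1 / real (Suc j)) / 2)" for \<omega> :: "nat \<Rightarrow> real"
  have Wm[measurable]: "W \<in> borel_measurable Q" unfolding W_def by measurable
  define \<nu> where "\<nu> = distr Q borel W"
  have "prob_space \<nu>" unfolding \<nu>_def by (rule Q.prob_space_distr) simp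
  moreover have "sets \<nu> = sets borel" by (simp add: \<nu>_def)
  moreover have "char \<nu> t ^ n = phi t" for t
  proof -
    have L: "(\<lambda>m. iexp (t * (a * ln 2 / 2 + (\<Sum>j<m. a * ln (1 + 1 / real (Suc j)) / 2))) *
        (\<Prod>k<Suc m. char (distr Q borel (\<lambda>\<omega>. \<omega> k)) (- t / (2 * real k + 1)))) \<longlonglongrightarrow> char \<nu> t"
      unfolding \<nu>_def W_def by (rule Q.char_series[OF ind s2])
    have Ln: "(\<lambda>m. (iexp (t * (a * ln 2 / 2 + (\<Sum>j<m. a * ln (1 + 1 / real (Suc j)) / 2))) *
        (\<Prod>k<Suc m. char (distr Q borel (\<lambda>\<omega>. \<omega> k)) (- t / (2 * real k + 1)))) ^ n) \<longlonglongrightarrow> char \<nu> t ^ n"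
      by (rule tendsto_power[OF L])
    have ex: "iexp (t * (a * ln 2 / 2 + (\<Sum>j<m. a * ln (1 + 1 / real (Suc j)) / 2))) ^ n =
        iexp (t * (ln 2 / 2 + (\<Sum>j<m. ln (1 + 1 / real (Suc j)) / 2)))" for m
    proof -
      have "t * (a * ln 2 / 2 + (\<Sum>j<m. a * ln (1 + 1 / real (Suc j)) / 2)) =
          a * (t * (ln 2 / 2 + (\<Sum>j<m. ln (1 + 1 / real (Suc j)) / 2)))"
        by (simp add: sum_distrib_left algebra_simps)
      then have "iexp (t * (a * ln 2 / 2 + (\<Sum>j<m. a * ln (1 + 1 / real (Suc j)) / 2))) ^ n =
          exp (of_nat n * (\<i> * of_real (a * (t * (ln 2 / 2 + (\<Sum>j<m. ln (1 + 1 / real (Suc j)) / 2))))))"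
        by (simp only: exp_of_nat_mult)
      also have "of_nat n * (\<i> * of_real (a * (t * (ln 2 / 2 + (\<Sum>j<m. ln (1 + 1 / real (Suc j)) / 2))))) =
          \<i> * of_real (real n * a * (t * (ln 2 / 2 + (\<Sum>j<m. ln (1 + 1 / real (Suc j)) / 2))))"
        by (simp add: algebra_simps)
      finally show ?thesis unfolding na by simp
    qed
    have ch: "char (distr Q borel (\<lambda>\<omega>. \<omega> k)) (- t / (2 * real k + 1)) ^ n = 1 / (1 + \<i> * of_real (t / (2 * real k + 1)))" for k
      unfolding distrX \<rho>_def char_gdens_root[OF n, folded a_def] char_exponential by simp
    have "(\<lambda>m. (iexp (t * (a * ln 2 / 2 + (\<Sum>j<m. a * ln (1 + 1 / real (Suc j)) / 2))) *
        (\<Prod>k<Suc m. char (distr Q borel (\<lambda>\<omega>. \<omega> k)) (- t / (2 * real k + 1)))) ^ n) =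
        (\<lambda>m. iexp (t * (ln 2 / 2 + (\<Sum>j<m. ln (1 + 1 / real (Suc j)) / 2))) *
              (\<Prod>k<Suc m. 1 / (1 + \<i> * of_real (t / (2 * real k + 1)))))"
      by (simp only: power_mult_distrib ex prod_power_distrib ch)
    with Ln have "(\<lambda>m. iexp (t * (ln 2 / 2 + (\<Sum>j<m. ln (1 + 1 / real (Suc j)) / 2))) *
              (\<Prod>k<Suc m. 1 / (1 + \<i> * of_real (t / (2 * real k + 1))))) \<longlonglongrightarrow> char \<nu> t ^ n" by simp
    moreover have "(\<lambda>m. iexp (t * (ln 2 / 2 + (\<Sum>j<m. ln (1 + 1 / real (Suc j)) / 2))) *
              (\<Prod>k<Suc m. 1 / (1 + \<i> * of_real (t / (2 * real k + 1))))) \<longlonglongrightarrow> phi t"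
      unfolding phi_def by (rule gamma_prod_limit)
    ultimately show ?thesis by (rule LIMSEQ_unique)
  qed
  ultimately show ?thesis by blast
qed



theorem mainTheorem1:
  fixes M :: "'a measure" and Z :: "'a \<Rightarrow> real"
    and N :: "'b measure" and E :: "nat \<Rightarrow> 'b \<Rightarrow> real"
  assumes "prob_space M"
    and "distributed M lborel Z (\<lambda>x. ennreal (std_normal_density x))"
    and "prob_space N"
    and "prob_space.indep_vars N (\<lambda>_. borel) E UNIV"
    and "\<And>j. distributed N lborel (E j) (\<lambda>x. ennreal (exponential_density 1 x))"
  shows "infinitely_divisible (distr M borel (\<lambda>\<omega>. ln \<bar>Z \<omega>\<bar>)) \<and>
         (AE \<omega> in N. summable (\<lambda>j. E (Suc j) \<omega> / (2 * real (Suc j) + 1)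
                                   - ln (1 + 1 / real (Suc j)) / 2)) \<and>
         (AE \<omega> in N. summable (\<lambda>j. (E (Suc j) \<omega> - 1) / (2 * real (Suc j) + 1))) \<and>
         distr M borel (\<lambda>\<omega>. ln \<bar>Z \<omega>\<bar>) =
         distr N borel (\<lambda>\<omega>. ln 2 / 2 - E 0 \<omega>
            - (\<Sum>j. E (Suc j) \<omega> / (2 * real (Suc j) + 1) - ln (1 + 1 / real (Suc j)) / 2)) \<and>
         distr M borel (\<lambda>\<omega>. ln \<bar>Z \<omega>\<bar>) =
         distr N borel (\<lambda>\<omega>. - (euler_mascheroni + ln 2) / 2 - (E 0 \<omega> - 1)
            - (\<Sum>j. (E (Suc j) \<omega> - 1) / (2 * real (Suc j) + 1)))"
proof -
  interpret Mp: prob_space M by fact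
  interpret Np: prob_space N by fact
  note D = assms(2) and ind = assms(4) and DE = assms(5)
  have [measurable]: "Z \<in> borel_measurable M" using distributed_measurable[OF D] by simp
  have [measurable]: "E j \<in> borel_measurable N" for j
    using ind unfolding Np.indep_vars_def by auto
  define \<mu> where "\<mu> = distr M borel (\<lambda>\<omega>. ln \<bar>Z \<omega>\<bar>)"
  have r\<mu>: "real_distribution \<mu>" unfolding \<mu>_def by (rule Mp.real_distribution_distr) simp
  have ch\<mu>: "char \<mu> t = phi t" for t unfolding \<mu>_def by (rule Mp.char_ln_abs[OF D])
  define Y1 where "Y1 \<omega> = ln 2 / 2 - E 0 \<omega>
            - (\<Sum>j. E (Suc j) \<omega> / (2 * real (Suc j) + 1) - ln (1 + 1 / real (Suc j)) / 2)" for \<omega>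
  define Y2 where "Y2 \<omega> = - (euler_mascheroni + ln 2) / 2 - (E 0 \<omega> - 1)
            - (\<Sum>j. (E (Suc j) \<omega> - 1) / (2 * real (Suc j) + 1))" for \<omega>
  have [measurable]: "Y1 \<in> borel_measurable N" unfolding Y1_def by measurable
  have [measurable]: "Y2 \<in> borel_measurable N" unfolding Y2_def by measurable
  have rY1: "real_distribution (distr N borel Y1)" by (rule Np.real_distribution_distr) simp
  have c4: "\<mu> = distr N borel Y1"
  proof (rule Levy_uniqueness[OF r\<mu> rY1])
    show "char \<mu> = char (distr N borel Y1)"
    proof
      fix t
      show "char \<mu> t = char (distr N borel Y1) t"
        unfolding ch\<mu> Y1_def[abs_def] by (rule Np.char_Y1[OF ind DE, symmetric])
    qed
  qed
  have c5: "\<mu> = distr N borel Y2"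
  proof -
    have "distr N borel Y1 = distr N borel Y2"
      by (rule distr_cong_AE) (use Np.Y1_Y2_AE[OF ind DE] in \<open>auto simp: Y1_def Y2_def\<close>)
    then show ?thesis using c4 by simp
  qed
  have c1: "infinitely_divisible \<mu>"
    unfolding infinitely_divisible_def
  proof (intro allI impI)
    fix n :: nat assume n: "1 \<le> n"
    obtain \<nu> where \<nu>: "prob_space \<nu>" "sets \<nu> = sets borel" "\<And>t. char \<nu> t ^ n = phi t"
      using inf_div_root[OF n] by blast
    have cp: "prob_space (conv_pow \<nu> n) \<and> sets (conv_pow \<nu> n) = sets borel \<and> char (conv_pow \<nu> n) t = char \<nu> t ^ n" for t
      by (rule conv_pow_facts[OF \<nu>(1,2)])
    have rc: "real_distribution (conv_pow \<nu> n)"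
      using cp[of 0] unfolding real_distribution_def real_distribution_axioms_def by simp
    have "\<mu> = conv_pow \<nu> n"
    proof (rule Levy_uniqueness[OF r\<mu> rc])
      show "char \<mu> = char (conv_pow \<nu> n)"
      proof
        fix t show "char \<mu> t = char (conv_pow \<nu> n) t"
          using cp[of t] \<nu>(3)[of t] ch\<mu>[of t] by simp
      qed
    qed
    then show "\<exists>\<nu>. prob_space \<nu> \<and> sets \<nu> = sets borel \<and> \<mu> = conv_pow \<nu> n"
      using \<nu>(1,2) by blast
  qed
  show ?thesis
    using c1 c4 c5 Np.exp_series_facts[OF ind DE]
    unfolding \<mu>_def Y1_def[abs_def] Y2_def[abs_def] by blast
qed

end
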